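(* Let $n\ge 2$, $\mathcal F\subseteq S_n$ with $|\mathcal F|=c\,n!$, $f=2\chi_{\mathcal F}-1$, $f_1$ its orthogonal projection onto $U_1$, $\epsilon=\mathbb E[(f-f_1)^2]$, and assume $\epsilon\ge n^{-7/3}$. Let $(X,Y)\sim\mathcal R$. With probability at least $1-3\epsilon^{1/7}$, the restriction $(X,Y)$ satisfies all of: (a) $g(X,Y)$ is $(\epsilon^{4/7},\epsilon^{1/7})$-almost Boolean; (b) $\mathbb E[g_1(X,Y)]$ and $\mathbb E[g_2(X,Y)]$ are both within $\epsilon^{1/7}$ of $c-\tfrac12$; (c) $\mathbb E[(|g(X,Y)|-1)^2]\le\epsilon^{6/7}$, where all expectations and probabilities concerning $g,g_1,g_2$ are over a uniform random $\pi\in T_{X,Y}$.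
   Context: $S_n$ is the symmetric group on $[n]$; $T_{ij}$ is the indicator of $\{\pi:\pi(i)=j\}$; $U_1=\mathrm{span}\{T_{ij}\}$ with inner product $\langle f,g\rangle=\frac1{n!}\sum_\pi f(\pi)g(\pi)$. Let $a_{ij}=(n-1)\langle f,T_{ij}\rangle-\frac{n-2}{n}(2c-1)$ (so $f_1(\pi)=\sum_i a_{i\pi(i)}$). A restriction is a pair $(X,Y)$, $X,Y\subseteq[n]$, $|X|=|Y|$; $T_{X,Y}=\{\pi:\pi(X)=Y\}$ with the uniform measure. For $\pi\in T_{X,Y}$: $g_1(X,Y)(\pi)=\sum_{i\in X}a_{i\pi(i)}$, $g_2(X,Y)(\pi)=\sum_{i\notin X}a_{i\pi(i)}$, $g(X,Y)=g_1(X,Y)+g_2(X,Y)$ (the restriction of $f_1$ to $T_{X,Y}$). The distribution $\mathcal R$: each $i$ lies in $X$ independently with probability $1/2$, then $Y$ is uniform among subsets of size $|X|$. A function $\phi$ on a probability space is $(\delta,\epsilon)$-almost Boolean if $\Pr[\,||\phi|-1|\le\epsilon\,]\ge 1-\delta$. *)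

theory Defs
  imports "HOL-Probability.Probability" "HOL-Combinatorics.Permutations"
begin

definition Sym :: "nat \<Rightarrow> (nat \<Rightarrow> nat) set" where
  "Sym n = {p. p permutes {..<n}}"

definition inner_S :: "nat \<Rightarrow> ((nat \<Rightarrow> nat) \<Rightarrow> real) \<Rightarrow> ((nat \<Rightarrow> nat) \<Rightarrow> real) \<Rightarrow> real" where
  "inner_S n f g = (\<Sum>p\<in>Sym n. f p * g p) / fact n"

definition Tij :: "nat \<Rightarrow> nat \<Rightarrow> (nat \<Rightarrow> nat) \<Rightarrow> real" where
  "Tij i j p = (if p i = j then 1 else 0)"

definition U1 :: "nat \<Rightarrow> ((nat \<Rightarrow> nat) \<Rightarrow> real) set" where
  "U1 n = {h. \<exists>lam :: nat \<Rightarrow> nat \<Rightarrow> real.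
              h = (\<lambda>p. if p \<in> Sym n then (\<Sum>i<n. \<Sum>j<n. lam i j * Tij i j p) else 0)}"

definition proj_U1 :: "nat \<Rightarrow> ((nat \<Rightarrow> nat) \<Rightarrow> real) \<Rightarrow> ((nat \<Rightarrow> nat) \<Rightarrow> real)" where
  "proj_U1 n f = (THE h. h \<in> U1 n \<and> (\<forall>u\<in>U1 n. inner_S n (\<lambda>p. f p - h p) u = 0))"

definition fam_c :: "nat \<Rightarrow> (nat \<Rightarrow> nat) set \<Rightarrow> real" where
  "fam_c n F = real (card F) / fact n"

definition fam_f :: "(nat \<Rightarrow> nat) set \<Rightarrow> (nat \<Rightarrow> nat) \<Rightarrow> real" where
  "fam_f F p = 2 * indicator F p - 1"

definition fam_eps :: "nat \<Rightarrow> (nat \<Rightarrow> nat) set \<Rightarrow> real" where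
  "fam_eps n F = inner_S n (\<lambda>p. (fam_f F p - proj_U1 n (fam_f F) p)^2) (\<lambda>_. 1)"

definition coef_a :: "nat \<Rightarrow> (nat \<Rightarrow> nat) set \<Rightarrow> nat \<Rightarrow> nat \<Rightarrow> real" where
  "coef_a n F i j = (real n - 1) * inner_S n (fam_f F) (Tij i j)
                    - (real n - 2) / real n * (2 * fam_c n F - 1)"

definition TXY :: "nat \<Rightarrow> nat set \<Rightarrow> nat set \<Rightarrow> (nat \<Rightarrow> nat) set" where
  "TXY n X Y = {p \<in> Sym n. p ` X = Y}"

definition g1 :: "nat \<Rightarrow> (nat \<Rightarrow> nat) set \<Rightarrow> nat set \<Rightarrow> (nat \<Rightarrow> nat) \<Rightarrow> real" where
  "g1 n F X p = (\<Sum>i\<in>X. coef_a n F i (p i))"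

definition g2 :: "nat \<Rightarrow> (nat \<Rightarrow> nat) set \<Rightarrow> nat set \<Rightarrow> (nat \<Rightarrow> nat) \<Rightarrow> real" where
  "g2 n F X p = (\<Sum>i\<in>{..<n} - X. coef_a n F i (p i))"

definition gfun :: "nat \<Rightarrow> (nat \<Rightarrow> nat) set \<Rightarrow> nat set \<Rightarrow> (nat \<Rightarrow> nat) \<Rightarrow> real" where
  "gfun n F X p = g1 n F X p + g2 n F X p"

text \<open>The distribution R on restrictions: X uniform on subsets of [n]
  (each i independently with prob. 1/2), then Y uniform among subsets of size |X|.\<close>
definition distR :: "nat \<Rightarrow> (nat set \<times> nat set) pmf" where
  "distR n = bind_pmf (pmf_of_set (Pow {..<n}))
      (\<lambda>X. map_pmf (\<lambda>Y. (X, Y)) (pmf_of_set {Y. Y \<subseteq> {..<n} \<and> card Y = card X}))"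

definition almost_boolean :: "'a pmf \<Rightarrow> ('a \<Rightarrow> real) \<Rightarrow> real \<Rightarrow> real \<Rightarrow> bool" where
  "almost_boolean M phi \<delta> \<epsilon> \<longleftrightarrow>
     measure_pmf.prob M {x. \<bar>\<bar>phi x\<bar> - 1\<bar> \<le> \<epsilon>} \<ge> 1 - \<delta>"

end

theory Submission
  imports Defs
begin

definition Ksub :: "nat \<Rightarrow> nat \<Rightarrow> nat set set" where
  "Ksub n k = {Y. Y \<subseteq> {..<n} \<and> card Y = k}"

lemma Ksub_finite: "finite (Ksub n k)"
  unfolding Ksub_def by (rule finite_subset[of _ "Pow {..<n}"]) auto

lemma Ksub_card: "card (Ksub n k) = n choose k"
  unfolding Ksub_def using n_subsets[of "{..<n}" k] by simp

lemma Ksub_ne: "k \<le> n \<Longrightarrow> Ksub n k \<noteq> {}"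
proof -
  assume "k \<le> n"
  hence "{..<k} \<in> Ksub n k" unfolding Ksub_def by auto
  thus ?thesis by auto
qed

lemma distR_expect:
  "measure_pmf.expectation (distR n) h =
     (\<Sum>X\<in>Pow {..<n}. (\<Sum>Y\<in>Ksub n (card X). h (X,Y)) / (2^n * real (n choose card X)))"
proof -
  have fin: "finite (Pow {..<n})" by simp
  have ne: "Pow {..<n} \<noteq> {}" by auto
  have kne0: "\<And>X. X \<subseteq> {..<n} \<Longrightarrow> Ksub n (card X) \<noteq> {}"
    using card_mono[of "{..<n}"] Ksub_ne by auto
  have e1: "measure_pmf.expectation (distR n) h =
     (\<Sum>X\<in>Pow {..<n}. measure_pmf.expectation (pmf_of_set (Ksub n (card X))) (\<lambda>Y. h (X, Y)) / real (card (Pow {..<n})))"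
    unfolding distR_def Ksub_def[symmetric]
    by (subst pmf_expectation_bind_pmf_of_set[OF ne fin]) (auto simp: Ksub_finite kne0 divide_inverse mult.commute)
  show ?thesis
    unfolding e1
  proof (rule sum.cong[OF refl])
    fix X assume X: "X \<in> Pow {..<n}"
    hence "card X \<le> n" using card_mono[of "{..<n}" X] by auto
    hence kne: "Ksub n (card X) \<noteq> {}" by (rule Ksub_ne)
    show "measure_pmf.expectation (pmf_of_set (Ksub n (card X))) (\<lambda>Y. h (X, Y)) / real (card (Pow {..<n}))
        = (\<Sum>Y\<in>Ksub n (card X). h (X,Y)) / (2^n * real (n choose card X))"
      using kne by (simp add: integral_pmf_of_set Ksub_finite Ksub_card card_Pow)
  qed
qed

lemma distR_prob:
  "measure_pmf.prob (distR n) A =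
     (\<Sum>X\<in>Pow {..<n}. (\<Sum>Y\<in>Ksub n (card X). indicator A (X,Y)) / (2^n * real (n choose card X)))"
proof -
  have "measure_pmf.prob (distR n) A = measure_pmf.expectation (distR n) (indicator A)"
    using Bochner_Integration.integral_indicator[of "measure_pmf (distR n)" A] by simp
  thus ?thesis by (simp only: distR_expect)
qed

abbreviation tr :: "nat \<Rightarrow> nat \<Rightarrow> nat \<Rightarrow> nat" where
  "tr \<equiv> Transposition.transpose"

lemma sum_invol:
  assumes "finite G" "\<And>x. x \<in> G \<Longrightarrow> \<sigma> x \<in> G" "\<And>x. x \<in> G \<Longrightarrow> \<sigma> (\<sigma> x) = x"
  shows "(\<Sum>x\<in>G. h (\<sigma> x)) = (\<Sum>x\<in>G. h x)"
proof -
  have "bij_betw \<sigma> G G"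
    by (rule bij_betw_byWitness[where f'=\<sigma>]) (use assms in auto)
  thus ?thesis by (rule sum.reindex_bij_betw)
qed

lemma avg_const:
  fixes g :: "'a \<Rightarrow> real"
  assumes "finite A" "\<And>x y. x \<in> A \<Longrightarrow> y \<in> A \<Longrightarrow> g x = g y" "x \<in> A"
  shows "g x = sum g A / card A"
proof -
  have "sum g A = (\<Sum>y\<in>A. g x)" by (rule sum.cong[OF refl]) (metis assms(2,3))
  also have "\<dots> = card A * g x" by simp
  finally have "sum g A = card A * g x" .
  moreover have "card A > 0" using assms card_gt_0_iff by blast
  ultimately show ?thesis by simp
qed

lemma in_tr_image: "x \<in> tr a b ` X \<longleftrightarrow> tr a b x \<in> X"
proof
  assume "x \<in> tr a b ` X" then obtain y where "y \<in> X" "x = tr a b y" by blast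
  thus "tr a b x \<in> X" by simp
next
  assume "tr a b x \<in> X"
  hence "tr a b (tr a b x) \<in> tr a b ` X" by blast
  thus "x \<in> tr a b ` X" by simp
qed

lemma tr_image_invol: "tr a b ` (tr a b ` X) = X"
  by (simp add: image_image)

lemma swap_sum:
  fixes \<psi> :: "nat set \<Rightarrow> real"
  assumes "finite \<X>" "\<And>X. X \<in> \<X> \<Longrightarrow> tr a b ` X \<in> \<X>"
    "\<And>X. X \<in> \<X> \<Longrightarrow> \<psi> (tr a b ` X) = \<psi> X"
  shows "(\<Sum>X\<in>\<X>. \<psi> X * (if a \<in> X then 1 else 0)) = (\<Sum>X\<in>\<X>. \<psi> X * (if b \<in> X then 1 else 0))"
proof -
  have "(\<Sum>X\<in>\<X>. \<psi> X * (if b \<in> X then 1 else 0)) =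
        (\<Sum>X\<in>\<X>. (\<lambda>X. \<psi> X * (if b \<in> X then 1 else 0)) (tr a b ` X))"
    by (rule sum_invol[symmetric]) (use assms tr_image_invol in auto)
  also have "\<dots> = (\<Sum>X\<in>\<X>. \<psi> X * (if a \<in> X then 1 else 0))"
    by (intro sum.cong refl) (simp add: assms(3) in_tr_image)
  finally show ?thesis by (rule sym)
qed

definition symfam :: "nat \<Rightarrow> nat set set \<Rightarrow> (nat set \<Rightarrow> real) \<Rightarrow> bool" where
  "symfam n \<X> \<phi> \<longleftrightarrow> finite \<X> \<and> (\<forall>X\<in>\<X>. X \<subseteq> {..<n}) \<and>
     (\<forall>a<n. \<forall>b<n. \<forall>X\<in>\<X>. tr a b ` X \<in> \<X> \<and> \<phi> (tr a b ` X) = \<phi> X)"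

lemma tr_image_card: "card (tr a b ` X) = card X"
  by (rule card_image[OF inj_on_transpose])

lemma symfam_card:
  assumes "symfam n \<X> \<phi>"
  shows "symfam n \<X> (\<lambda>X. \<phi> X * g (card X))"
  using assms unfolding symfam_def by (simp add: tr_image_card)

lemma symfam_single:
  assumes "symfam n \<X> \<phi>" "i < n" "i' < n"
  shows "(\<Sum>X\<in>\<X>. \<phi> X * (if i \<in> X then 1 else 0)) = (\<Sum>X\<in>\<X>. \<phi> X * (if i' \<in> X then 1 else 0))"
  using assms unfolding symfam_def by (intro swap_sum) auto

lemma symfam_pair:
  assumes "symfam n \<X> \<phi>" "i < n" "a < n" "b < n" "a \<noteq> i" "b \<noteq> i"
  shows "(\<Sum>X\<in>\<X>. \<phi> X * (if i \<in> X then 1 else 0) * (if a \<in> X then 1 else 0)) =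
         (\<Sum>X\<in>\<X>. \<phi> X * (if i \<in> X then 1 else 0) * (if b \<in> X then 1 else 0))"
proof -
  have ti: "tr a b i = i" using assms by (simp add: transpose_def)
  have "(\<Sum>X\<in>\<X>. (\<phi> X * (if i \<in> X then 1 else 0)) * (if a \<in> X then 1 else 0)) =
         (\<Sum>X\<in>\<X>. (\<phi> X * (if i \<in> X then 1 else 0)) * (if b \<in> X then 1 else 0))"
    using assms unfolding symfam_def by (intro swap_sum) (auto simp: in_tr_image ti)
  thus ?thesis by simp
qed

lemma sum_over_subset_ind:
  fixes v :: "nat \<Rightarrow> real"
  assumes "X \<subseteq> {..<n}"
  shows "(\<Sum>i\<in>X. v i) = (\<Sum>i<n. v i * (if i \<in> X then 1 else 0))"
proof -
  have "(\<Sum>i<n. v i * (if i \<in> X then 1 else 0)) = (\<Sum>i<n. (if i \<in> X then v i else 0))"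
    by (rule sum.cong) auto
  also have "\<dots> = (\<Sum>i\<in>{..<n} \<inter> X. v i)"
    by (rule sum.inter_restrict[symmetric]) simp
  also have "{..<n} \<inter> X = X" using assms by auto
  finally show ?thesis by simp
qed

lemma moment1:
  fixes v :: "nat \<Rightarrow> real"
  assumes "symfam n \<X> \<phi>" "(\<Sum>i<n. v i) = 0"
  shows "(\<Sum>X\<in>\<X>. \<phi> X * (\<Sum>i\<in>X. v i)) = 0"
proof (cases "n = 0")
  case True
  hence e: "\<And>X. X \<in> \<X> \<Longrightarrow> X = {}" using assms(1) unfolding symfam_def by auto
  show ?thesis
  proof (rule sum.neutral, rule ballI)
    fix X assume "X \<in> \<X>" thus "\<phi> X * sum v X = 0" by (simp add: e[OF \<open>X \<in> \<X>\<close>])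
  qed
next
  case False
  define w where "w i = (\<Sum>X\<in>\<X>. \<phi> X * (if i \<in> X then 1 else 0))" for i
  have sub: "\<And>X. X \<in> \<X> \<Longrightarrow> X \<subseteq> {..<n}" using assms(1) unfolding symfam_def by auto
  have "(\<Sum>X\<in>\<X>. \<phi> X * (\<Sum>i\<in>X. v i)) = (\<Sum>X\<in>\<X>. \<Sum>i<n. v i * (\<phi> X * (if i \<in> X then 1 else 0)))"
  proof (rule sum.cong[OF refl])
    fix X assume "X \<in> \<X>"
    hence "(\<Sum>i\<in>X. v i) = (\<Sum>i<n. v i * (if i \<in> X then 1 else 0))" by (intro sum_over_subset_ind sub)
    thus "\<phi> X * (\<Sum>i\<in>X. v i) = (\<Sum>i<n. v i * (\<phi> X * (if i \<in> X then 1 else 0)))"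
      by (simp only: sum_distrib_left) (rule sum.cong; simp)
  qed
  also have "\<dots> = (\<Sum>i<n. \<Sum>X\<in>\<X>. v i * (\<phi> X * (if i \<in> X then 1 else 0)))"
    by (rule sum.swap)
  also have "\<dots> = (\<Sum>i<n. v i * w i)"
    unfolding w_def by (simp only: sum_distrib_left)
  also have "\<dots> = (\<Sum>i<n. v i * w 0)"
  proof (rule sum.cong[OF refl])
    fix i assume "i \<in> {..<n}"
    hence "w i = w 0" unfolding w_def by (intro symfam_single[OF assms(1)]) (use False in auto)
    thus "v i * w i = v i * w 0" by simp
  qed
  also have "\<dots> = 0" using assms(2) by (simp add: sum_distrib_right[symmetric])
  finally show ?thesis .
qed

definition ind :: "nat \<Rightarrow> nat set \<Rightarrow> real" where
  "ind i X = (if i \<in> X then 1 else 0)"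

lemma sum_ind_card:
  assumes "finite A"
  shows "(\<Sum>i\<in>A. ind i X) = real (card (A \<inter> X))"
proof -
  have "(\<Sum>i\<in>A. ind i X) = (\<Sum>i\<in>A. if i \<in> X then 1 else 0)" unfolding ind_def by simp
  also have "\<dots> = (\<Sum>i\<in>A \<inter> X. 1)" by (rule sum.inter_restrict[symmetric]) (rule assms)
  finally show ?thesis by simp
qed

lemma moment2:
  fixes v :: "nat \<Rightarrow> real"
  assumes sf: "symfam n \<X> \<phi>" and n2: "n \<ge> 2" and v0: "(\<Sum>i<n. v i) = 0"
  shows "(\<Sum>X\<in>\<X>. \<phi> X * (\<Sum>i\<in>X. v i)^2) =
         (\<Sum>X\<in>\<X>. \<phi> X * real (card X) * (real n - real (card X))) / (real n * (real n - 1)) * (\<Sum>i<n. (v i)^2)"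
proof -
  have fin: "finite \<X>" and sub: "\<And>X. X \<in> \<X> \<Longrightarrow> X \<subseteq> {..<n}" using sf unfolding symfam_def by auto
  define \<gamma> where "\<gamma> i i' = (\<Sum>X\<in>\<X>. \<phi> X * ind i X * ind i' X)" for i i'
  define \<delta> where "\<delta> i = (\<Sum>X\<in>\<X>. \<phi> X * ind i X * ((real n - real (card X)) / (real n - 1)))" for i
  have s1: "(\<Sum>X\<in>\<X>. \<phi> X * (\<Sum>i\<in>X. v i)^2) = (\<Sum>i<n. \<Sum>i'<n. v i * v i' * \<gamma> i i')"
  proof -
    have "(\<Sum>X\<in>\<X>. \<phi> X * (\<Sum>i\<in>X. v i)^2) = (\<Sum>X\<in>\<X>. \<Sum>i<n. \<Sum>i'<n. v i * v i' * (\<phi> X * ind i X * ind i' X))"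
    proof (rule sum.cong[OF refl])
      fix X assume X: "X \<in> \<X>"
      have "(\<Sum>i\<in>X. v i) = (\<Sum>i<n. v i * ind i X)"
        unfolding ind_def by (rule sum_over_subset_ind[OF sub[OF X]])
      hence "\<phi> X * (\<Sum>i\<in>X. v i)^2 = \<phi> X * ((\<Sum>i<n. v i * ind i X) * (\<Sum>i'<n. v i' * ind i' X))"
        by (simp add: power2_eq_square)
      also have "\<dots> = (\<Sum>i<n. \<Sum>i'<n. \<phi> X * ((v i * ind i X) * (v i' * ind i' X)))"
        unfolding sum_product by (simp only: sum_distrib_left)
      also have "\<dots> = (\<Sum>i<n. \<Sum>i'<n. v i * v i' * (\<phi> X * ind i X * ind i' X))"
        by (intro sum.cong refl) (simp add: algebra_simps)
      finally show "\<phi> X * (\<Sum>i\<in>X. v i)^2 = (\<Sum>i<n. \<Sum>i'<n. v i * v i' * (\<phi> X * ind i X * ind i' X))" .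
    qed
    also have "\<dots> = (\<Sum>i<n. \<Sum>X\<in>\<X>. \<Sum>i'<n. v i * v i' * (\<phi> X * ind i X * ind i' X))"
      by (rule sum.swap)
    also have "\<dots> = (\<Sum>i<n. \<Sum>i'<n. \<Sum>X\<in>\<X>. v i * v i' * (\<phi> X * ind i X * ind i' X))"
      by (intro sum.cong refl) (rule sum.swap)
    also have "\<dots> = (\<Sum>i<n. \<Sum>i'<n. v i * v i' * \<gamma> i i')"
      unfolding \<gamma>_def by (simp only: sum_distrib_left)
    finally show ?thesis .
  qed
  have s2: "(\<Sum>i'<n. v i' * \<gamma> i i') = v i * \<delta> i" if i: "i < n" for i
  proof -
    let ?R = "{..<n} - {i}"
    have cR: "card ?R = n - 1" using i by simp
    have cRr: "real (card ?R) = real n - 1" using cR n2 by simp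
    define G where "G = (\<Sum>i''\<in>?R. \<gamma> i i'')"
    have eqR: "\<gamma> i i' = G / (real n - 1)" if i': "i' \<in> ?R" for i'
    proof -
      have "\<gamma> i i' = sum (\<gamma> i) ?R / card ?R"
      proof (rule avg_const)
        fix x y assume "x \<in> ?R" "y \<in> ?R"
        thus "\<gamma> i x = \<gamma> i y" unfolding \<gamma>_def ind_def
          by (intro symfam_pair[OF sf i]) auto
      qed (use i' in auto)
      thus ?thesis unfolding G_def cRr .
    qed
    have G: "G = (\<Sum>X\<in>\<X>. \<phi> X * ind i X * (real (card X) - 1))"
    proof -
      have "G = (\<Sum>X\<in>\<X>. \<phi> X * ind i X * (\<Sum>i''\<in>?R. ind i'' X))"
        unfolding G_def \<gamma>_def by (subst sum.swap) (simp only: sum_distrib_left)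
      also have "\<dots> = (\<Sum>X\<in>\<X>. \<phi> X * ind i X * (real (card X) - 1))"
      proof (rule sum.cong[OF refl])
        fix X assume X: "X \<in> \<X>"
        show "\<phi> X * ind i X * (\<Sum>i''\<in>?R. ind i'' X) = \<phi> X * ind i X * (real (card X) - 1)"
        proof (cases "i \<in> X")
          case True
          have "?R \<inter> X = X - {i}" using sub[OF X] by auto
          moreover have "finite X" using sub[OF X] finite_subset by blast
          moreover have "card X \<ge> 1" using True \<open>finite X\<close> by (metis One_nat_def Suc_leI card_gt_0_iff empty_iff)
          ultimately have "(\<Sum>i''\<in>?R. ind i'' X) = real (card X) - 1"
            using True by (simp add: sum_ind_card card_Diff_singleton of_nat_diff)
          thus ?thesis by simp
        qed (simp add: ind_def)
      qed
      finally show ?thesis .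
    qed
    have vR: "(\<Sum>i'\<in>?R. v i') = - v i"
      using v0 sum.remove[of "{..<n}" i v] i by simp
    have "(\<Sum>i'<n. v i' * \<gamma> i i') = v i * \<gamma> i i + (\<Sum>i'\<in>?R. v i' * \<gamma> i i')"
      using sum.remove[of "{..<n}" i "\<lambda>i'. v i' * \<gamma> i i'"] i by simp
    also have "(\<Sum>i'\<in>?R. v i' * \<gamma> i i') = (\<Sum>i'\<in>?R. v i' * (G / (real n - 1)))"
      by (rule sum.cong[OF refl]) (simp add: eqR)
    also have "\<dots> = (\<Sum>i'\<in>?R. v i') * (G / (real n - 1))" by (rule sum_distrib_right[symmetric])
    also have "\<dots> = - v i * (G / (real n - 1))" by (simp only: vR)
    also have "\<gamma> i i = (\<Sum>X\<in>\<X>. \<phi> X * ind i X)" unfolding \<gamma>_def ind_def by (intro sum.cong) auto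
    finally have "(\<Sum>i'<n. v i' * \<gamma> i i') = v i * ((\<Sum>X\<in>\<X>. \<phi> X * ind i X) - G / (real n - 1))"
      by (simp add: algebra_simps)
    also have "(\<Sum>X\<in>\<X>. \<phi> X * ind i X) - G / (real n - 1) = \<delta> i"
    proof -
      have n1: "real n - 1 \<noteq> 0" using n2 by simp
      have "(\<Sum>X\<in>\<X>. \<phi> X * ind i X) - G / (real n - 1) =
            (\<Sum>X\<in>\<X>. \<phi> X * ind i X - \<phi> X * ind i X * (real (card X) - 1) / (real n - 1))"
        unfolding G by (simp add: sum_subtractf sum_divide_distrib)
      also have "\<dots> = \<delta> i" unfolding \<delta>_def
        by (intro sum.cong refl) (use n1 in \<open>simp add: field_simps\<close>)
      finally show ?thesis .
    qed
    finally show ?thesis .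
  qed
  have s3: "\<delta> i = (\<Sum>X\<in>\<X>. \<phi> X * real (card X) * (real n - real (card X))) / (real n * (real n - 1))"
    if i: "i < n" for i
  proof -
    have "\<delta> i = sum \<delta> {..<n} / card {..<n}"
    proof (rule avg_const)
      fix x y assume "x \<in> {..<n}" "y \<in> {..<n}"
      have ex: "\<delta> z = (\<Sum>X\<in>\<X>. (\<phi> X * ((real n - real (card X)) / (real n - 1))) * (if z \<in> X then 1 else 0))" for z
        unfolding \<delta>_def ind_def by (intro sum.cong refl) (simp add: mult_ac)
      show "\<delta> x = \<delta> y" unfolding ex
        by (rule symfam_single[OF symfam_card[OF sf, of "\<lambda>k. (real n - real k) / (real n - 1)"]]) (use \<open>x \<in> {..<n}\<close> \<open>y \<in> {..<n}\<close> in auto)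
    qed (use i in auto)
    also have "sum \<delta> {..<n} = (\<Sum>X\<in>\<X>. \<phi> X * ((real n - real (card X)) / (real n - 1)) * (\<Sum>i<n. ind i X))"
      unfolding \<delta>_def by (subst sum.swap) (simp add: sum_distrib_left sum_divide_distrib mult_ac)
    also have "\<dots> = (\<Sum>X\<in>\<X>. \<phi> X * ((real n - real (card X)) / (real n - 1)) * real (card X))"
    proof (rule sum.cong[OF refl])
      fix X assume X: "X \<in> \<X>"
      have "{..<n} \<inter> X = X" using sub[OF X] by auto
      thus "\<phi> X * ((real n - real (card X)) / (real n - 1)) * (\<Sum>i<n. ind i X) =
            \<phi> X * ((real n - real (card X)) / (real n - 1)) * real (card X)"
        by (simp add: sum_ind_card)
    qed
    finally show ?thesis
      by (simp add: sum_divide_distrib[symmetric] field_simps)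
  qed
  have "(\<Sum>X\<in>\<X>. \<phi> X * (\<Sum>i\<in>X. v i)^2) = (\<Sum>i<n. v i * (v i * \<delta> i))"
    unfolding s1 by (intro sum.cong refl) (simp add: s2 sum_distrib_left[symmetric] mult.assoc)
  also have "\<dots> = (\<Sum>i<n. (v i)^2 * ((\<Sum>X\<in>\<X>. \<phi> X * real (card X) * (real n - real (card X))) / (real n * (real n - 1))))"
    by (intro sum.cong refl) (simp add: s3 power2_eq_square)
  also have "\<dots> = (\<Sum>i<n. (v i)^2) * ((\<Sum>X\<in>\<X>. \<phi> X * real (card X) * (real n - real (card X))) / (real n * (real n - 1)))"
    by (rule sum_distrib_right[symmetric])
  finally show ?thesis by (simp only: mult.commute)
qed

lemma Pow_Suc_sum:
  fixes h :: "nat \<Rightarrow> real"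
  shows "(\<Sum>X\<in>Pow {..<Suc n}. h (card X)) = (\<Sum>X\<in>Pow {..<n}. h (card X) + h (Suc (card X)))"
proof -
  have P: "Pow {..<Suc n} = Pow {..<n} \<union> insert n ` Pow {..<n}"
    by (simp add: lessThan_Suc Pow_insert)
  have disj: "Pow {..<n} \<inter> insert n ` Pow {..<n} = {}" by auto
  have inj: "inj_on (insert n) (Pow {..<n})"
    unfolding inj_on_def by (metis PowD insert_absorb insert_ident lessThan_iff less_irrefl subsetD)
  have "(\<Sum>X\<in>Pow {..<Suc n}. h (card X)) = (\<Sum>X\<in>Pow {..<n}. h (card X)) + (\<Sum>X\<in>insert n ` Pow {..<n}. h (card X))"
    unfolding P by (rule sum.union_disjoint) (use disj in auto)
  also have "(\<Sum>X\<in>insert n ` Pow {..<n}. h (card X)) = (\<Sum>X\<in>Pow {..<n}. h (card (insert n X)))"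
    by (rule sum.reindex[OF inj, unfolded comp_def])
  also have "\<dots> = (\<Sum>X\<in>Pow {..<n}. h (Suc (card X)))"
  proof (rule sum.cong[OF refl])
    fix X assume "X \<in> Pow {..<n}"
    hence "finite X" "n \<notin> X" using finite_subset by auto
    thus "h (card (insert n X)) = h (Suc (card X))" by simp
  qed
  finally show ?thesis by (simp add: sum.distrib)
qed

lemma Pow_S0: "(\<Sum>X\<in>Pow {..<n}. (1::real)) = 2^n"
  by (simp add: card_Pow)

lemma Pow_S1: "(\<Sum>X\<in>Pow {..<n}. real (card X)) = real n * 2^n / 2"
proof (induction n)
  case 0 thus ?case by simp
next
  case (Suc n)
  have "(\<Sum>X\<in>Pow {..<Suc n}. real (card X)) = (\<Sum>X\<in>Pow {..<n}. real (card X) + real (Suc (card X)))"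
    by (rule Pow_Suc_sum)
  also have "\<dots> = 2 * (\<Sum>X\<in>Pow {..<n}. real (card X)) + (\<Sum>X\<in>Pow {..<n}. (1::real))"
    by (simp add: sum.distrib sum_distrib_left[symmetric])
  also have "\<dots> = real (Suc n) * 2^(Suc n) / 2" unfolding Suc.IH Pow_S0 by (simp add: field_simps)
  finally show ?case .
qed

lemma Pow_S2: "(\<Sum>X\<in>Pow {..<n}. (real (card X))^2) = 2^n * (real n^2 + real n) / 4"
proof (induction n)
  case 0 thus ?case by simp
next
  case (Suc n)
  have "(\<Sum>X\<in>Pow {..<Suc n}. (real (card X))^2) = (\<Sum>X\<in>Pow {..<n}. (real (card X))^2 + (real (Suc (card X)))^2)"
    by (rule Pow_Suc_sum)
  also have "\<dots> = 2 * (\<Sum>X\<in>Pow {..<n}. (real (card X))^2) + 2 * (\<Sum>X\<in>Pow {..<n}. real (card X)) + (\<Sum>X\<in>Pow {..<n}. (1::real))"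
    by (simp add: sum.distrib power2_eq_square algebra_simps sum_distrib_left)
  also have "\<dots> = 2^(Suc n) * (real (Suc n)^2 + real (Suc n)) / 4" unfolding Suc.IH Pow_S0 Pow_S1
    by (simp add: field_simps power2_eq_square)
  finally show ?case .
qed

lemma Pow_C1: "(\<Sum>X\<in>Pow {..<n}. (real n - real (card X))^2) = 2^n * real n * (real n + 1) / 4"
proof -
  have "(\<Sum>X\<in>Pow {..<n}. (real n - real (card X))^2) =
     (\<Sum>X\<in>Pow {..<n}. (real n)^2 * 1 - 2 * real n * real (card X) + (real (card X))^2)"
    by (intro sum.cong refl) (simp add: power2_eq_square algebra_simps)
  also have "\<dots> = (real n)^2 * (\<Sum>X\<in>Pow {..<n}. (1::real)) - 2 * real n * (\<Sum>X\<in>Pow {..<n}. real (card X)) + (\<Sum>X\<in>Pow {..<n}. (real (card X))^2)"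
    by (simp add: sum.distrib sum_subtractf sum_distrib_left)
  also have "\<dots> = 2^n * real n * (real n + 1) / 4" unfolding Pow_S0 Pow_S1 Pow_S2
    by (simp add: field_simps power2_eq_square)
  finally show ?thesis .
qed

lemma Pow_C2: assumes "n \<ge> 1"
  shows "(\<Sum>X\<in>Pow {..<n}. (real (card X) / real n - 1/2)^2) = 2^n / (4 * real n)"
proof -
  have n0: "real n \<noteq> 0" using assms by simp
  have "(\<Sum>X\<in>Pow {..<n}. (real (card X) / real n - 1/2)^2) =
     (\<Sum>X\<in>Pow {..<n}. (1/4) * 1 - (1 / real n) * real (card X) + (1/(real n)^2) * (real (card X))^2)"
    by (intro sum.cong refl) (use n0 in \<open>simp add: power2_eq_square field_simps\<close>)
  also have "\<dots> = (1/4) * (\<Sum>X\<in>Pow {..<n}. (1::real)) - (1 / real n) * (\<Sum>X\<in>Pow {..<n}. real (card X)) + (1/(real n)^2) * (\<Sum>X\<in>Pow {..<n}. (real (card X))^2)"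
    by (simp add: sum.distrib sum_subtractf sum_distrib_left)
  also have "\<dots> = 2^n / (4 * real n)" unfolding Pow_S0 Pow_S1 Pow_S2
    using n0 by (simp add: field_simps power2_eq_square)
  finally show ?thesis .
qed

lemma Sym_finite: "finite (Sym n)"
  unfolding Sym_def by (rule finite_permutations) simp

lemma Sym_card: "card (Sym n) = fact n"
  unfolding Sym_def by (rule card_permutations) simp_all

lemma Sym_lt: "p \<in> Sym n \<Longrightarrow> i < n \<Longrightarrow> p i < n"
  unfolding Sym_def using permutes_in_image[of p "{..<n}" i] by simp

lemma Sym_out: "p \<in> Sym n \<Longrightarrow> \<not> i < n \<Longrightarrow> p i = i"
  unfolding Sym_def using permutes_not_in[of p "{..<n}" i] by simp

lemma Sym_inj: "p \<in> Sym n \<Longrightarrow> inj p"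
  unfolding Sym_def using permutes_inj by blast

lemma Sym_tr: "p \<in> Sym n \<Longrightarrow> a < n \<Longrightarrow> b < n \<Longrightarrow> tr a b \<circ> p \<in> Sym n"
  unfolding Sym_def by (auto intro: permutes_compose permutes_swap_id)

lemma tr_comp_invol: "tr a b \<circ> (tr a b \<circ> p) = p"
  by (simp add: fun_eq_iff)

lemma perm_swap_sum:
  fixes h :: "(nat \<Rightarrow> nat) \<Rightarrow> real"
  assumes "finite P" "\<And>p. p \<in> P \<Longrightarrow> tr a b \<circ> p \<in> P"
  shows "(\<Sum>p\<in>P. h (tr a b \<circ> p)) = (\<Sum>p\<in>P. h p)"
proof (rule sum_invol)
  fix p assume "p \<in> P" thus "tr a b \<circ> p \<in> P" by (rule assms(2))
next
  fix p show "tr a b \<circ> (tr a b \<circ> p) = p" by (rule tr_comp_invol)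
qed (rule assms(1))

lemma tr_eq_iff: "tr a b x = a \<longleftrightarrow> x = b"
  by (auto simp: Transposition.transpose_def split: if_splits)

lemma tr_eq_iff2: "tr a b x = b \<longleftrightarrow> x = a"
  by (auto simp: Transposition.transpose_def split: if_splits)

lemma tr_fix_iff: "w \<noteq> a \<Longrightarrow> w \<noteq> b \<Longrightarrow> tr a b z = w \<longleftrightarrow> z = w"
  by (auto simp: Transposition.transpose_def split: if_splits)

definition pind :: "(nat \<Rightarrow> nat) \<Rightarrow> nat \<Rightarrow> nat \<Rightarrow> real" where
  "pind p k l = (if p k = l then 1 else 0)"

lemma perm_count_eq:
  fixes \<psi> :: "(nat \<Rightarrow> nat) \<Rightarrow> real"
  assumes "finite P" "\<And>p. p \<in> P \<Longrightarrow> tr a b \<circ> p \<in> P"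
    "\<And>p. p \<in> P \<Longrightarrow> \<psi> (tr a b \<circ> p) = \<psi> p"
  shows "(\<Sum>p\<in>P. \<psi> p * pind p k a) = (\<Sum>p\<in>P. \<psi> p * pind p k b)"
proof -
  have "(\<Sum>p\<in>P. \<psi> p * pind p k b) = (\<Sum>p\<in>P. (\<lambda>p. \<psi> p * pind p k b) (tr a b \<circ> p))"
    by (rule perm_swap_sum[symmetric]) (use assms in auto)
  also have "\<dots> = (\<Sum>p\<in>P. \<psi> p * pind p k a)"
  proof (rule sum.cong[OF refl])
    fix p assume "p \<in> P"
    have "pind (tr a b \<circ> p) k b = pind p k a" unfolding pind_def by (simp add: tr_eq_iff2)
    thus "\<psi> (tr a b \<circ> p) * pind (tr a b \<circ> p) k b = \<psi> p * pind p k a" using assms(3)[OF \<open>p \<in> P\<close>] by simp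
  qed
  finally show ?thesis by (rule sym)
qed

lemma sum_pind_row:
  assumes "p \<in> Sym n" "k < n"
  shows "(\<Sum>l<n. pind p k l) = 1"
proof -
  have "(\<Sum>l<n. pind p k l) = (\<Sum>l\<in>{..<n}. if l = p k then 1 else 0)"
    unfolding pind_def by (intro sum.cong) auto
  also have "\<dots> = 1" using Sym_lt[OF assms] by simp
  finally show ?thesis .
qed

lemma sum_pind_col:
  assumes "p \<in> Sym n" "l < n"
  shows "(\<Sum>k<n. pind p k l) = 1"
proof -
  have pp: "p permutes {..<n}" using assms(1) unfolding Sym_def by simp
  have "(\<Sum>k<n. pind p k l) = (\<Sum>k\<in>{..<n}. if k = inv p l then 1 else 0)"
  proof (rule sum.cong[OF refl])
    fix k show "pind p k l = (if k = inv p l then 1 else 0)"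
      unfolding pind_def using permutes_inv_eq[OF pp, of l k] by auto
  qed
  also have "\<dots> = 1" using permutes_in_image[OF permutes_inv[OF pp], of l] assms(2) by simp
  finally show ?thesis .
qed

lemma N1:
  assumes "k < n" "l < n"
  shows "(\<Sum>p\<in>Sym n. pind p k l) = fact n / n"
proof -
  define c where "c l = (\<Sum>p\<in>Sym n. pind p k l)" for l
  have ceq: "c x = c y" if "x < n" "y < n" for x y
    using perm_count_eq[of "Sym n" x y "\<lambda>_. 1" k] that
    unfolding c_def by (simp add: Sym_finite Sym_tr)
  have "c l = sum c {..<n} / card {..<n}"
  proof (rule avg_const)
    fix x y assume "x \<in> {..<n}" "y \<in> {..<n}" thus "c x = c y" by (intro ceq) auto
  qed (use assms in auto)
  also have "sum c {..<n} = (\<Sum>p\<in>Sym n. \<Sum>l<n. pind p k l)"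
    unfolding c_def by (rule sum.swap)
  also have "\<dots> = (\<Sum>p\<in>Sym n. 1)"
    by (intro sum.cong refl) (simp add: sum_pind_row assms)
  also have "\<dots> = fact n" by (simp add: Sym_card)
  finally show ?thesis unfolding c_def by simp
qed

lemma N2:
  assumes "k < n" "l < n" "i < n" "i \<noteq> k" "j < n" "j \<noteq> l" "n \<ge> 2"
  shows "(\<Sum>p\<in>Sym n. pind p k l * pind p i j) = fact n / (real n * (real n - 1))"
proof -
  define R where "R = {..<n} - {l}"
  define c where "c j = (\<Sum>p\<in>Sym n. pind p k l * pind p i j)" for j
  have ceq: "c x = c y" if "x \<in> R" "y \<in> R" for x y
  proof -
    have "(\<Sum>p\<in>Sym n. pind p k l * pind p i x) = (\<Sum>p\<in>Sym n. pind p k l * pind p i y)"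
    proof (rule perm_count_eq)
      fix p assume "p \<in> Sym n"
      show "pind (tr x y \<circ> p) k l = pind p k l"
        using that tr_fix_iff[of l x y "p k"] unfolding R_def pind_def by auto
    qed (use that in \<open>auto simp: Sym_finite Sym_tr R_def\<close>)
    thus ?thesis unfolding c_def .
  qed
  have cR: "card R = n - 1" unfolding R_def using assms by simp
  have "c j = sum c R / card R"
  proof (rule avg_const)
    fix x y assume "x \<in> R" "y \<in> R" thus "c x = c y" by (rule ceq)
  qed (use assms in \<open>auto simp: R_def\<close>)
  also have "sum c R = (\<Sum>p\<in>Sym n. pind p k l * (\<Sum>j\<in>R. pind p i j))"
    unfolding c_def by (subst sum.swap) (simp add: sum_distrib_left)
  also have "\<dots> = (\<Sum>p\<in>Sym n. pind p k l)"
  proof (rule sum.cong[OF refl])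
    fix p assume p: "p \<in> Sym n"
    show "pind p k l * (\<Sum>j\<in>R. pind p i j) = pind p k l"
    proof (cases "p k = l")
      case True
      have "p i \<noteq> l" using True Sym_inj[OF p] assms(4) by (metis injD)
      hence "(\<Sum>j\<in>R. pind p i j) = (\<Sum>j<n. pind p i j)"
        unfolding R_def using sum.remove[of "{..<n}" l "pind p i"] assms(2) by (simp add: pind_def)
      thus ?thesis using sum_pind_row[OF p assms(3)] by simp
    qed (simp add: pind_def)
  qed
  also have "\<dots> = fact n / n" by (rule N1[OF assms(1,2)])
  finally show ?thesis unfolding c_def cR using assms by (simp add: of_nat_diff)
qed

lemma G1:
  fixes G :: "nat \<Rightarrow> real"
  assumes "k < n"
  shows "(\<Sum>p\<in>Sym n. G (p k)) = fact n / n * (\<Sum>j<n. G j)"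
proof -
  have "(\<Sum>p\<in>Sym n. G (p k)) = (\<Sum>p\<in>Sym n. \<Sum>j<n. G j * pind p k j)"
  proof (rule sum.cong[OF refl])
    fix p assume p: "p \<in> Sym n"
    have "(\<Sum>j<n. G j * pind p k j) = (\<Sum>j\<in>{..<n}. if j = p k then G j else 0)"
      unfolding pind_def by (intro sum.cong refl) auto
    also have "\<dots> = G (p k)" using Sym_lt[OF p assms] by simp
    finally show "G (p k) = (\<Sum>j<n. G j * pind p k j)" by simp
  qed
  also have "\<dots> = (\<Sum>j<n. G j * (\<Sum>p\<in>Sym n. pind p k j))"
    by (subst sum.swap) (simp add: sum_distrib_left)
  also have "\<dots> = (\<Sum>j<n. G j * (fact n / n))"
    by (intro sum.cong refl) (simp add: N1 assms)
  also have "\<dots> = (\<Sum>j<n. G j) * (fact n / n)" by (rule sum_distrib_right[symmetric])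
  finally show ?thesis by (simp only: mult.commute)
qed

lemma G2:
  fixes H :: "nat \<Rightarrow> real"
  assumes "k < n" "i < n" "k \<noteq> i" "l < n" "n \<ge> 2"
  shows "(\<Sum>p\<in>Sym n. pind p k l * H (p i)) = fact n / (real n * (real n - 1)) * (\<Sum>j\<in>{..<n} - {l}. H j)"
proof -
  have "(\<Sum>p\<in>Sym n. pind p k l * H (p i)) = (\<Sum>p\<in>Sym n. \<Sum>j<n. H j * (pind p k l * pind p i j))"
  proof (rule sum.cong[OF refl])
    fix p assume p: "p \<in> Sym n"
    have "(\<Sum>j<n. H j * (pind p k l * pind p i j)) = (\<Sum>j\<in>{..<n}. if j = p i then pind p k l * H j else 0)"
      unfolding pind_def by (intro sum.cong refl) auto
    also have "\<dots> = pind p k l * H (p i)" using Sym_lt[OF p assms(2)] by simp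
    finally show "pind p k l * H (p i) = (\<Sum>j<n. H j * (pind p k l * pind p i j))" by simp
  qed
  also have "\<dots> = (\<Sum>j<n. H j * (\<Sum>p\<in>Sym n. pind p k l * pind p i j))"
    by (subst sum.swap) (simp add: sum_distrib_left)
  also have "\<dots> = (\<Sum>j<n. if j = l then 0 else H j * (fact n / (real n * (real n - 1))))"
  proof (rule sum.cong[OF refl])
    fix j assume j: "j \<in> {..<n}"
    show "H j * (\<Sum>p\<in>Sym n. pind p k l * pind p i j) = (if j = l then 0 else H j * (fact n / (real n * (real n - 1))))"
    proof (cases "j = l")
      case True
      have "(\<Sum>p\<in>Sym n. pind p k l * pind p i j) = 0"
      proof (rule sum.neutral, rule ballI)
        fix p assume p: "p \<in> Sym n"
        have "p k \<noteq> p i" using Sym_inj[OF p] assms(3) by (simp add: inj_eq)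
        thus "pind p k l * pind p i j = 0" using True unfolding pind_def by auto
      qed
      thus ?thesis using True by simp
    next
      case False
      thus ?thesis using N2[of k n l i j] assms j by simp
    qed
  qed
  also have "\<dots> = (\<Sum>j\<in>{..<n} - {l}. if j = l then 0 else H j * (fact n / (real n * (real n - 1))))"
    using sum.remove[of "{..<n}" l "\<lambda>j. if j = l then 0 else H j * (fact n / (real n * (real n - 1)))"] assms(4)
    by simp
  also have "\<dots> = (\<Sum>j\<in>{..<n} - {l}. H j * (fact n / (real n * (real n - 1))))"
    by (rule sum.cong[OF refl]) simp
  also have "\<dots> = (\<Sum>j\<in>{..<n} - {l}. H j) * (fact n / (real n * (real n - 1)))"
    by (rule sum_distrib_right[symmetric])
  finally show ?thesis by (simp only: mult.commute)
qed

locale L =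
  fixes n :: nat and F :: "(nat \<Rightarrow> nat) set"
  assumes n2: "n \<ge> 2" and FS: "F \<subseteq> Sym n"
begin

abbreviation "f \<equiv> fam_f F"
abbreviation "m \<equiv> 2 * fam_c n F - 1"
abbreviation "a \<equiv> coef_a n F"

definition Fk :: "nat \<Rightarrow> nat \<Rightarrow> real" where
  "Fk k l = (\<Sum>p\<in>Sym n. f p * pind p k l)"

definition Af :: "(nat \<Rightarrow> nat) \<Rightarrow> real" where
  "Af p = (\<Sum>i<n. a i (p i))"

lemma fact_pos: "fact n > (0::real)" by simp

lemma sum_f: "(\<Sum>p\<in>Sym n. f p) = fact n * m"
proof -
  have "(\<Sum>p\<in>Sym n. f p) = 2 * (\<Sum>p\<in>Sym n. indicator F p) - (\<Sum>p\<in>Sym n. (1::real))"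
    unfolding fam_f_def by (simp add: sum_subtractf sum_distrib_left)
  also have "(\<Sum>p\<in>Sym n. indicator F p) = real (card F)"
  proof -
    have "(\<Sum>p\<in>Sym n. indicator F p :: real) = (\<Sum>p\<in>Sym n. if p \<in> F then (1::real) else 0)"
      by (rule sum.cong) (auto simp: indicator_def)
    also have "\<dots> = (\<Sum>p\<in>Sym n \<inter> F. 1)"
      by (rule sum.inter_restrict[OF Sym_finite, symmetric])
    also have "Sym n \<inter> F = F" using FS by blast
    finally show ?thesis by simp
  qed
  finally have h: "(\<Sum>p\<in>Sym n. f p) = 2 * real (card F) - fact n" by (simp add: Sym_card)
  have "fact n * (2 * (real (card F) / fact n) - 1) = 2 * real (card F) - (fact n :: real)"
    using fact_pos by (simp add: field_simps)
  thus ?thesis unfolding fam_c_def h by simp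
qed

lemma inner_T: "inner_S n f (Tij k l) = Fk k l / fact n"
  unfolding inner_S_def Fk_def Tij_def pind_def by simp

lemma a_def': "a k l = (real n - 1) * (Fk k l / fact n) - (real n - 2) / real n * m"
  unfolding coef_a_def inner_T by simp

lemma Fk_row: "k < n \<Longrightarrow> (\<Sum>l<n. Fk k l) = fact n * m"
  unfolding Fk_def by (subst sum.swap) (simp add: sum_distrib_left[symmetric] sum_pind_row sum_f)

lemma Fk_col: "l < n \<Longrightarrow> (\<Sum>k<n. Fk k l) = fact n * m"
  unfolding Fk_def by (subst sum.swap) (simp add: sum_distrib_left[symmetric] sum_pind_col sum_f)

lemma a_row: "k < n \<Longrightarrow> (\<Sum>l<n. a k l) = m"
proof -
  assume k: "k < n"
  have "(\<Sum>l<n. a k l) = (real n - 1) / fact n * (\<Sum>l<n. Fk k l) - real n * ((real n - 2) / real n * m)"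
    unfolding a_def' by (simp add: sum_subtractf sum_distrib_left sum_divide_distrib)
  also have "\<dots> = m" using k n2 fact_pos by (simp add: Fk_row field_simps)
  finally show ?thesis .
qed

lemma a_col: "l < n \<Longrightarrow> (\<Sum>k<n. a k l) = m"
proof -
  assume l: "l < n"
  have "(\<Sum>k<n. a k l) = (real n - 1) / fact n * (\<Sum>k<n. Fk k l) - real n * ((real n - 2) / real n * m)"
    unfolding a_def' by (simp add: sum_subtractf sum_distrib_left sum_divide_distrib)
  also have "\<dots> = m" using l n2 fact_pos by (simp add: Fk_col field_simps)
  finally show ?thesis .
qed

lemma a_row_rem: "i < n \<Longrightarrow> l < n \<Longrightarrow> (\<Sum>j\<in>{..<n} - {l}. a i j) = m - a i l"
  using sum.remove[of "{..<n}" l "a i"] a_row[of i] by simp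

lemma a_col_rem: "k < n \<Longrightarrow> l < n \<Longrightarrow> (\<Sum>i\<in>{..<n} - {k}. a i l) = m - a k l"
  using sum.remove[of "{..<n}" k "\<lambda>i. a i l"] a_col[of l] by simp

lemma Af_Tkl:
  assumes k: "k < n" and l: "l < n"
  shows "(\<Sum>p\<in>Sym n. pind p k l * Af p) = Fk k l"
proof -
  define c2 :: real where "c2 = fact n / (real n * (real n - 1))"
  have "(\<Sum>p\<in>Sym n. pind p k l * Af p) = (\<Sum>p\<in>Sym n. \<Sum>i<n. pind p k l * a i (p i))"
    unfolding Af_def by (simp add: sum_distrib_left)
  also have "\<dots> = (\<Sum>i<n. \<Sum>p\<in>Sym n. pind p k l * a i (p i))" by (rule sum.swap)
  also have "\<dots> = (\<Sum>p\<in>Sym n. pind p k l * a k (p k)) + (\<Sum>i\<in>{..<n} - {k}. \<Sum>p\<in>Sym n. pind p k l * a i (p i))"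
    using sum.remove[of "{..<n}" k "\<lambda>i. \<Sum>p\<in>Sym n. pind p k l * a i (p i)"] k by simp
  also have "(\<Sum>p\<in>Sym n. pind p k l * a k (p k)) = (\<Sum>p\<in>Sym n. a k l * pind p k l)"
    by (intro sum.cong refl) (simp add: pind_def)
  also have "\<dots> = a k l * (fact n / n)" by (simp add: sum_distrib_left[symmetric] N1 k l)
  also have "(\<Sum>i\<in>{..<n} - {k}. \<Sum>p\<in>Sym n. pind p k l * a i (p i)) = (\<Sum>i\<in>{..<n} - {k}. c2 * (m - a i l))"
  proof (rule sum.cong[OF refl])
    fix i assume i: "i \<in> {..<n} - {k}"
    have "(\<Sum>p\<in>Sym n. pind p k l * a i (p i)) = c2 * (\<Sum>j\<in>{..<n} - {l}. a i j)"
      unfolding c2_def by (rule G2) (use i k l n2 in auto)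
    also have "\<dots> = c2 * (m - a i l)" using i l by (simp add: a_row_rem)
    finally show "(\<Sum>p\<in>Sym n. pind p k l * a i (p i)) = c2 * (m - a i l)" .
  qed
  also have "\<dots> = c2 * ((real n - 1) * m - (m - a k l))"
  proof -
    have "(\<Sum>i\<in>{..<n} - {k}. c2 * (m - a i l)) = c2 * ((\<Sum>i\<in>{..<n} - {k}. m) - (\<Sum>i\<in>{..<n} - {k}. a i l))"
      by (simp add: sum_distrib_left[symmetric] sum_subtractf)
    also have "(\<Sum>i\<in>{..<n} - {k}. m) = (real n - 1) * m" using k by (simp add: of_nat_diff)
    finally show ?thesis using a_col_rem[OF k l] by simp
  qed
  also have "a k l * (fact n / n) + c2 * ((real n - 1) * m - (m - a k l)) = Fk k l"
  proof -
    have n0: "real n \<noteq> 0" "real n - 1 \<noteq> 0" using n2 by auto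
    show ?thesis unfolding c2_def a_def' using n0 fact_pos by (simp add: field_simps)
  qed
  finally show ?thesis .
qed

definition Aext :: "(nat \<Rightarrow> nat) \<Rightarrow> real" where
  "Aext p = (if p \<in> Sym n then (\<Sum>i<n. \<Sum>j<n. a i j * Tij i j p) else 0)"

lemma sum_T_eval: "p \<in> Sym n \<Longrightarrow> i < n \<Longrightarrow> (\<Sum>j<n. lam i j * Tij i j p) = lam i (p i)"
proof -
  assume p: "p \<in> Sym n" and i: "i < n"
  have "(\<Sum>j<n. lam i j * Tij i j p) = (\<Sum>j\<in>{..<n}. if j = p i then lam i j else 0)"
    unfolding Tij_def by (intro sum.cong refl) auto
  also have "\<dots> = lam i (p i)" using Sym_lt[OF p i] by simp
  finally show ?thesis .
qed

lemma Aext_eq: "p \<in> Sym n \<Longrightarrow> Aext p = Af p"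
  unfolding Aext_def Af_def by (simp add: sum_T_eval)

lemma Aext_U1: "Aext \<in> U1 n"
  unfolding U1_def Aext_def by blast

lemma Tij_pind: "Tij i j p = pind p i j"
  unfolding Tij_def pind_def by simp

lemma orth_T: "i < n \<Longrightarrow> j < n \<Longrightarrow> (\<Sum>p\<in>Sym n. (f p - Af p) * pind p i j) = 0"
proof -
  assume i: "i < n" and j: "j < n"
  have "(\<Sum>p\<in>Sym n. (f p - Af p) * pind p i j) = Fk i j - (\<Sum>p\<in>Sym n. pind p i j * Af p)"
    unfolding Fk_def by (simp add: sum_subtractf algebra_simps)
  thus ?thesis using Af_Tkl[OF i j] by simp
qed

lemma orth_U1: "u \<in> U1 n \<Longrightarrow> (\<Sum>p\<in>Sym n. (f p - Aext p) * u p) = 0"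
proof -
  assume "u \<in> U1 n"
  then obtain lam where u: "u = (\<lambda>p. if p \<in> Sym n then (\<Sum>i<n. \<Sum>j<n. lam i j * Tij i j p) else 0)"
    unfolding U1_def by blast
  have "(\<Sum>p\<in>Sym n. (f p - Aext p) * u p) = (\<Sum>p\<in>Sym n. \<Sum>i<n. \<Sum>j<n. lam i j * ((f p - Af p) * pind p i j))"
    unfolding u by (intro sum.cong refl) (simp add: Aext_eq sum_distrib_left Tij_pind mult_ac)
  also have "\<dots> = (\<Sum>i<n. \<Sum>j<n. lam i j * (\<Sum>p\<in>Sym n. (f p - Af p) * pind p i j))"
    by (subst sum.swap, rule sum.cong[OF refl], subst sum.swap, simp add: sum_distrib_left)
  also have "\<dots> = 0" by (simp add: orth_T)
  finally show ?thesis .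
qed

lemma inner_orth: "u \<in> U1 n \<Longrightarrow> inner_S n (\<lambda>p. f p - Aext p) u = 0"
  unfolding inner_S_def by (simp add: orth_U1)

lemma U1_diff: "h \<in> U1 n \<Longrightarrow> (\<lambda>p. h p - Aext p) \<in> U1 n"
proof -
  assume "h \<in> U1 n"
  then obtain lam where h: "h = (\<lambda>p. if p \<in> Sym n then (\<Sum>i<n. \<Sum>j<n. lam i j * Tij i j p) else 0)"
    unfolding U1_def by blast
  have "(\<lambda>p. h p - Aext p) = (\<lambda>p. if p \<in> Sym n then (\<Sum>i<n. \<Sum>j<n. (lam i j - a i j) * Tij i j p) else 0)"
    unfolding h Aext_def by (auto simp: sum_subtractf algebra_simps)
  thus ?thesis unfolding U1_def mem_Collect_eq by (intro exI[of _ "\<lambda>i j. lam i j - a i j"])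
qed

lemma U1_zero_out: "h \<in> U1 n \<Longrightarrow> p \<notin> Sym n \<Longrightarrow> h p = 0"
  unfolding U1_def by auto

lemma proj_eq: "proj_U1 n f = Aext"
  unfolding proj_U1_def
proof (rule the_equality)
  show "Aext \<in> U1 n \<and> (\<forall>u\<in>U1 n. inner_S n (\<lambda>p. f p - Aext p) u = 0)"
    using Aext_U1 inner_orth by blast
next
  fix h assume h: "h \<in> U1 n \<and> (\<forall>u\<in>U1 n. inner_S n (\<lambda>p. f p - h p) u = 0)"
  define d where "d p = h p - Aext p" for p
  have dU: "d \<in> U1 n" unfolding d_def[abs_def] using U1_diff h by blast
  have e1: "(\<Sum>p\<in>Sym n. (f p - h p) * d p) = 0"
    using h dU unfolding inner_S_def by auto
  have e2: "(\<Sum>p\<in>Sym n. (f p - Aext p) * d p) = 0" using orth_U1[OF dU] .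
  have "(\<Sum>p\<in>Sym n. (d p)^2) = (\<Sum>p\<in>Sym n. (f p - Aext p) * d p) - (\<Sum>p\<in>Sym n. (f p - h p) * d p)"
    by (simp add: sum_subtractf[symmetric] d_def power2_eq_square algebra_simps)
  hence "(\<Sum>p\<in>Sym n. (d p)^2) = 0" using e1 e2 by simp
  hence z: "\<forall>p\<in>Sym n. (d p)^2 = 0" using sum_nonneg_eq_0_iff[of "Sym n" "\<lambda>p. (d p)^2"] Sym_finite by simp
  show "h = Aext"
  proof
    fix p show "h p = Aext p"
    proof (cases "p \<in> Sym n")
      case True thus ?thesis using z d_def by simp
    next
      case False thus ?thesis using U1_zero_out[of h p] h by (simp add: Aext_def)
    qed
  qed
qed

lemma eps_eq: "fam_eps n F = (\<Sum>p\<in>Sym n. (f p - Af p)^2) / fact n"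
  unfolding fam_eps_def inner_S_def proj_eq by (simp add: Aext_eq)

lemma f_pm1: "\<bar>f p\<bar> = 1"
  unfolding fam_f_def by (simp add: indicator_def)

lemma Af_sq_le: "(\<Sum>p\<in>Sym n. (Af p)^2) \<le> fact n"
proof -
  have o: "(\<Sum>p\<in>Sym n. (f p - Af p) * Af p) = 0"
    using orth_U1[OF Aext_U1] by (simp add: Aext_eq)
  have f2: "(f p)^2 = 1" for p
  proof -
    have "\<bar>f p\<bar>^2 = 1" by (simp add: f_pm1)
    thus ?thesis by simp
  qed
  have "0 \<le> (\<Sum>p\<in>Sym n. (f p - Af p)^2)" by (simp add: sum_nonneg)
  also have "\<dots> = (\<Sum>p\<in>Sym n. (f p)^2) - (\<Sum>p\<in>Sym n. (Af p)^2) - 2 * (\<Sum>p\<in>Sym n. (f p - Af p) * Af p)"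
    by (simp add: sum_subtractf[symmetric] sum_distrib_left power2_eq_square algebra_simps)
  also have "\<dots> = fact n - (\<Sum>p\<in>Sym n. (Af p)^2)" using o by (simp add: f2 Sym_card)
  finally show ?thesis by simp
qed

definition b :: "nat \<Rightarrow> nat \<Rightarrow> real" where
  "b i j = a i j - m / real n"

definition Bsum :: real where
  "Bsum = (\<Sum>i<n. \<Sum>j<n. (b i j)^2)"

lemma n_pos: "real n > 0" using n2 by simp

lemma b_row: "i < n \<Longrightarrow> (\<Sum>j<n. b i j) = 0"
  unfolding b_def using n_pos by (simp add: sum_subtractf a_row)

lemma b_col: "j < n \<Longrightarrow> (\<Sum>i<n. b i j) = 0"
  unfolding b_def using n_pos by (simp add: sum_subtractf a_col)

lemma b_row_rem: "i < n \<Longrightarrow> l < n \<Longrightarrow> (\<Sum>j\<in>{..<n} - {l}. b i j) = - b i l"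
  using sum.remove[of "{..<n}" l "b i"] b_row[of i] by simp

lemma b_col_rem: "i < n \<Longrightarrow> l < n \<Longrightarrow> (\<Sum>i'\<in>{..<n} - {i}. b i' l) = - b i l"
  using sum.remove[of "{..<n}" i "\<lambda>i'. b i' l"] b_col[of l] by simp

lemma Af_b: "p \<in> Sym n \<Longrightarrow> Af p = m + (\<Sum>i<n. b i (p i))"
  unfolding Af_def b_def using n_pos by (simp add: sum_subtractf)

lemma Bsum_nonneg: "Bsum \<ge> 0"
  unfolding Bsum_def by (intro sum_nonneg) simp

lemma pair_sum:
  assumes i: "i < n" and i': "i' < n" and ne: "i \<noteq> i'"
  shows "(\<Sum>p\<in>Sym n. b i (p i) * b i' (p i')) = - (fact n / (real n * (real n - 1))) * (\<Sum>l<n. b i l * b i' l)"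
proof -
  define c2 :: real where "c2 = fact n / (real n * (real n - 1))"
  have "(\<Sum>p\<in>Sym n. b i (p i) * b i' (p i')) = (\<Sum>p\<in>Sym n. \<Sum>l<n. b i l * (pind p i l * b i' (p i')))"
  proof (rule sum.cong[OF refl])
    fix p assume p: "p \<in> Sym n"
    have "(\<Sum>l<n. b i l * (pind p i l * b i' (p i'))) = (\<Sum>l\<in>{..<n}. if l = p i then b i l * b i' (p i') else 0)"
      unfolding pind_def by (intro sum.cong refl) auto
    also have "\<dots> = b i (p i) * b i' (p i')" using Sym_lt[OF p i] by simp
    finally show "b i (p i) * b i' (p i') = (\<Sum>l<n. b i l * (pind p i l * b i' (p i')))" by simp
  qed
  also have "\<dots> = (\<Sum>l<n. b i l * (\<Sum>p\<in>Sym n. pind p i l * b i' (p i')))"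
    by (subst sum.swap) (simp add: sum_distrib_left)
  also have "\<dots> = (\<Sum>l<n. b i l * (c2 * (- b i' l)))"
  proof (rule sum.cong[OF refl])
    fix l assume l: "l \<in> {..<n}"
    have "(\<Sum>p\<in>Sym n. pind p i l * b i' (p i')) = c2 * (\<Sum>j\<in>{..<n} - {l}. b i' j)"
      unfolding c2_def by (rule G2) (use i i' ne l n2 in auto)
    also have "\<dots> = c2 * (- b i' l)" using l i' by (simp add: b_row_rem)
    finally show "b i l * (\<Sum>p\<in>Sym n. pind p i l * b i' (p i')) = b i l * (c2 * (- b i' l))" by simp
  qed
  also have "\<dots> = - c2 * (\<Sum>l<n. b i l * b i' l)"
    by (simp add: sum_distrib_left mult_ac)
  finally show ?thesis unfolding c2_def .
qed

lemma diag_sum: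
  assumes i: "i < n"
  shows "(\<Sum>p\<in>Sym n. b i (p i) * b i (p i)) = fact n / real n * (\<Sum>l<n. b i l * b i l)"
  using G1[OF i, of "\<lambda>j. b i j * b i j"] by simp

lemma Bp_sq: "(\<Sum>p\<in>Sym n. (\<Sum>i<n. b i (p i))^2) = fact n / (real n - 1) * Bsum"
proof -
  define c1 :: real where "c1 = fact n / real n"
  define c2 :: real where "c2 = fact n / (real n * (real n - 1))"
  have "(\<Sum>p\<in>Sym n. (\<Sum>i<n. b i (p i))^2) = (\<Sum>p\<in>Sym n. \<Sum>i<n. \<Sum>i'<n. b i (p i) * b i' (p i'))"
    by (simp add: power2_eq_square sum_product)
  also have "\<dots> = (\<Sum>i<n. \<Sum>i'<n. \<Sum>p\<in>Sym n. b i (p i) * b i' (p i'))"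
    by (subst sum.swap, rule sum.cong[OF refl], subst sum.swap, rule refl)
  also have "\<dots> = (\<Sum>i<n. (c1 + c2) * (\<Sum>l<n. (b i l)^2))"
  proof (rule sum.cong[OF refl])
    fix i assume i: "i \<in> {..<n}"
    have "(\<Sum>i'<n. \<Sum>p\<in>Sym n. b i (p i) * b i' (p i')) =
          (\<Sum>p\<in>Sym n. b i (p i) * b i (p i)) + (\<Sum>i'\<in>{..<n} - {i}. \<Sum>p\<in>Sym n. b i (p i) * b i' (p i'))"
      using sum.remove[of "{..<n}" i "\<lambda>i'. \<Sum>p\<in>Sym n. b i (p i) * b i' (p i')"] i by simp
    also have "(\<Sum>i'\<in>{..<n} - {i}. \<Sum>p\<in>Sym n. b i (p i) * b i' (p i')) =
               (\<Sum>i'\<in>{..<n} - {i}. - c2 * (\<Sum>l<n. b i l * b i' l))"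
      unfolding c2_def by (intro sum.cong refl pair_sum) (use i in auto)
    also have "\<dots> = - c2 * (\<Sum>i'\<in>{..<n} - {i}. \<Sum>l<n. b i l * b i' l)"
      by (rule sum_distrib_left[symmetric])
    also have "(\<Sum>i'\<in>{..<n} - {i}. \<Sum>l<n. b i l * b i' l) = (\<Sum>l<n. \<Sum>i'\<in>{..<n} - {i}. b i l * b i' l)"
      by (rule sum.swap)
    also have "\<dots> = (\<Sum>l<n. b i l * (\<Sum>i'\<in>{..<n} - {i}. b i' l))"
      by (simp only: sum_distrib_left)
    also have "(\<Sum>l<n. b i l * (\<Sum>i'\<in>{..<n} - {i}. b i' l)) = - (\<Sum>l<n. (b i l)^2)"
      using i by (simp add: b_col_rem power2_eq_square sum_negf)
    also have "- c2 * (- (\<Sum>l<n. (b i l)^2)) = c2 * (\<Sum>l<n. (b i l)^2)" by simp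
    also have "(\<Sum>p\<in>Sym n. b i (p i) * b i (p i)) = c1 * (\<Sum>l<n. (b i l)^2)"
      unfolding c1_def using diag_sum i by (simp add: power2_eq_square)
    finally show "(\<Sum>i'<n. \<Sum>p\<in>Sym n. b i (p i) * b i' (p i')) = (c1 + c2) * (\<Sum>l<n. (b i l)^2)"
      by (simp add: algebra_simps)
  qed
  also have "\<dots> = (c1 + c2) * Bsum" unfolding Bsum_def by (simp add: sum_distrib_left)
  also have "c1 + c2 = fact n / (real n - 1)"
    unfolding c1_def c2_def using n2 by (simp add: field_simps)
  finally show ?thesis .
qed

lemma Bp_sum: "(\<Sum>p\<in>Sym n. (\<Sum>i<n. b i (p i))) = 0"
proof -
  have "(\<Sum>p\<in>Sym n. (\<Sum>i<n. b i (p i))) = (\<Sum>i<n. \<Sum>p\<in>Sym n. b i (p i))" by (rule sum.swap)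
  also have "\<dots> = (\<Sum>i<n. fact n / real n * (\<Sum>j<n. b i j))"
    by (intro sum.cong refl) (simp add: G1)
  also have "\<dots> = 0" by (simp add: b_row)
  finally show ?thesis .
qed

lemma Af_sq_sum: "(\<Sum>p\<in>Sym n. (Af p)^2) = fact n * m^2 + fact n / (real n - 1) * Bsum"
proof -
  have "(\<Sum>p\<in>Sym n. (Af p)^2) = (\<Sum>p\<in>Sym n. m^2 + 2 * m * (\<Sum>i<n. b i (p i)) + (\<Sum>i<n. b i (p i))^2)"
    by (intro sum.cong refl) (simp add: Af_b power2_eq_square algebra_simps)
  also have "\<dots> = fact n * m^2 + 2 * m * (\<Sum>p\<in>Sym n. (\<Sum>i<n. b i (p i))) + (\<Sum>p\<in>Sym n. (\<Sum>i<n. b i (p i))^2)"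
    by (simp only: sum.distrib sum_distrib_left[symmetric]) (simp add: Sym_card)
  also have "\<dots> = fact n * m^2 + fact n / (real n - 1) * Bsum" by (simp only: Bp_sum Bp_sq)
  finally show ?thesis .
qed

lemma key_bound: "m^2 + Bsum / (real n - 1) \<le> 1"
proof -
  have "fact n * m^2 + fact n / (real n - 1) * Bsum \<le> fact n"
    using Af_sq_le Af_sq_sum by simp
  hence "fact n * (m^2 + Bsum / (real n - 1)) \<le> fact n * 1" by (simp add: algebra_simps)
  thus ?thesis using fact_pos by (simp only: mult_le_cancel_left_pos)
qed

end

lemma TXY_sub: "TXY n X Y \<subseteq> Sym n" unfolding TXY_def by auto

lemma TXY_finite: "finite (TXY n X Y)" by (rule finite_subset[OF TXY_sub Sym_finite])

lemma Sym_image_card: "p \<in> Sym n \<Longrightarrow> card (p ` X) = card X"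
proof -
  assume "p \<in> Sym n"
  hence "inj p" by (rule Sym_inj)
  thus ?thesis by (rule card_image[OF inj_on_subset[OF _ subset_UNIV]])
qed

lemma Sym_image_sub: "p \<in> Sym n \<Longrightarrow> X \<subseteq> {..<n} \<Longrightarrow> p ` X \<subseteq> {..<n}"
  using Sym_lt by auto

lemma mixture_sum:
  fixes \<phi> :: "(nat \<Rightarrow> nat) \<Rightarrow> real"
  assumes X: "X \<subseteq> {..<n}"
  shows "(\<Sum>Y\<in>Ksub n (card X). \<Sum>p\<in>TXY n X Y. \<phi> p) = (\<Sum>p\<in>Sym n. \<phi> p)"
proof -
  have "(\<Sum>Y\<in>Ksub n (card X). sum \<phi> {p \<in> Sym n. p ` X = Y}) = sum \<phi> (Sym n)"
  proof (rule sum.group[OF Sym_finite Ksub_finite])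
    show "(\<lambda>p. p ` X) ` Sym n \<subseteq> Ksub n (card X)"
    proof
      fix Z assume "Z \<in> (\<lambda>p. p ` X) ` Sym n"
      then obtain p where p: "p \<in> Sym n" and Z: "Z = p ` X" by blast
      show "Z \<in> Ksub n (card X)" unfolding Ksub_def Z
        using Sym_image_card[OF p, of X] Sym_image_sub[OF p X] by simp
    qed
  qed
  thus ?thesis unfolding TXY_def .
qed

lemma exists_perm_map:
  assumes Y: "Y \<subseteq> {..<n}" and Y': "Y' \<subseteq> {..<n}" and c: "card Y = card Y'"
  shows "\<exists>\<sigma>\<in>Sym n. \<sigma> ` Y = Y'"
proof -
  let ?U = "{..<n::nat}"
  have fY: "finite Y" "finite Y'" using Y Y' finite_subset by auto
  obtain g where g: "bij_betw g Y Y'" using finite_same_card_bij[OF fY c] by blast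
  have c2: "card (?U - Y) = card (?U - Y')" using Y Y' c fY by (simp add: card_Diff_subset)
  obtain h where h: "bij_betw h (?U - Y) (?U - Y')" using finite_same_card_bij[OF _ _ c2] by blast
  define \<sigma> where "\<sigma> x = (if x \<in> Y then g x else if x \<in> ?U then h x else x)" for x
  have b1: "bij_betw \<sigma> Y Y'" using g by (rule bij_betw_cong[THEN iffD1, rotated]) (simp add: \<sigma>_def)
  have b2: "bij_betw \<sigma> (?U - Y) (?U - Y')" using h by (rule bij_betw_cong[THEN iffD1, rotated]) (simp add: \<sigma>_def)
  have "bij_betw \<sigma> (Y \<union> (?U - Y)) (Y' \<union> (?U - Y'))"
    by (rule bij_betw_combine[OF b1 b2]) auto
  moreover have "Y \<union> (?U - Y) = ?U" "Y' \<union> (?U - Y') = ?U" using Y Y' by auto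
  ultimately have "bij_betw \<sigma> ?U ?U" by simp
  moreover have "\<sigma> x = x" if "x \<notin> ?U" for x using that Y unfolding \<sigma>_def by auto
  ultimately have "\<sigma> permutes ?U" by (intro bij_imp_permutes) auto
  moreover have "\<sigma> ` Y = Y'" using b1 bij_betw_imp_surj_on by blast
  ultimately show ?thesis unfolding Sym_def by blast
qed

lemma card_TXY_le:
  assumes X: "X \<subseteq> {..<n}" and Y: "Y \<subseteq> {..<n}" and Y': "Y' \<subseteq> {..<n}" and c: "card Y = card Y'"
  shows "card (TXY n X Y) \<le> card (TXY n X Y')"
proof -
  obtain \<sigma> where s: "\<sigma> \<in> Sym n" "\<sigma> ` Y = Y'" using exists_perm_map[OF Y Y' c] by blast
  have "inj_on (\<lambda>p. \<sigma> \<circ> p) (TXY n X Y)"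
  proof (rule inj_onI)
    fix p q assume "\<sigma> \<circ> p = \<sigma> \<circ> q"
    hence "\<And>x. \<sigma> (p x) = \<sigma> (q x)" by (metis comp_apply)
    hence "\<And>x. p x = q x" using Sym_inj[OF s(1)] by (simp add: inj_eq)
    thus "p = q" by (rule ext)
  qed
  moreover have "(\<lambda>p. \<sigma> \<circ> p) ` TXY n X Y \<subseteq> TXY n X Y'"
  proof
    fix q assume "q \<in> (\<lambda>p. \<sigma> \<circ> p) ` TXY n X Y"
    then obtain p where p: "p \<in> TXY n X Y" and q: "q = \<sigma> \<circ> p" by blast
    have "q \<in> Sym n" using p s(1) unfolding q TXY_def Sym_def by (auto intro: permutes_compose)
    moreover have "q ` X = Y'"
    proof -
      have "q ` X = \<sigma> ` (p ` X)" unfolding q by (rule image_comp[symmetric])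
      thus ?thesis using p s(2) unfolding TXY_def by simp
    qed
    ultimately show "q \<in> TXY n X Y'" unfolding TXY_def by simp
  qed
  ultimately show ?thesis by (rule card_inj_on_le[OF _ _ TXY_finite])
qed

lemma card_TXY:
  assumes X: "X \<subseteq> {..<n}" and Y: "Y \<in> Ksub n (card X)"
  shows "real (card (TXY n X Y)) = fact n / real (n choose card X)"
proof -
  have eq: "card (TXY n X Y1) = card (TXY n X Y2)" if "Y1 \<in> Ksub n (card X)" "Y2 \<in> Ksub n (card X)" for Y1 Y2
    using card_TXY_le[OF X, of Y1 Y2] card_TXY_le[OF X, of Y2 Y1] that unfolding Ksub_def by auto
  have "real (card (TXY n X Y)) = (\<Sum>Y'\<in>Ksub n (card X). real (card (TXY n X Y'))) / card (Ksub n (card X))"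
  proof (rule avg_const[OF Ksub_finite _ Y])
    fix x y assume "x \<in> Ksub n (card X)" "y \<in> Ksub n (card X)"
    thus "real (card (TXY n X x)) = real (card (TXY n X y))" using eq[of x y] by simp
  qed
  also have "(\<Sum>Y'\<in>Ksub n (card X). real (card (TXY n X Y'))) = (\<Sum>p\<in>Sym n. 1)"
    using mixture_sum[OF X, of "\<lambda>_. 1"] by simp
  also have "\<dots> = fact n" by (simp add: Sym_card)
  finally show ?thesis by (simp add: Ksub_card)
qed

lemma TXY_ne:
  assumes X: "X \<subseteq> {..<n}" and Y: "Y \<in> Ksub n (card X)"
  shows "TXY n X Y \<noteq> {}"
proof -
  have "card X \<le> n" using X card_mono[of "{..<n}" X] by simp
  hence "real (n choose card X) > 0" by simp
  hence "real (card (TXY n X Y)) > 0" using card_TXY[OF X Y] by simp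
  thus ?thesis by auto
qed

lemma T_first:
  fixes G :: "nat \<Rightarrow> real"
  assumes X: "X \<subseteq> {..<n}" and Y: "Y \<in> Ksub n (card X)" and i: "i \<in> X"
  shows "(\<Sum>p\<in>TXY n X Y. G (p i)) = real (card (TXY n X Y)) / real (card X) * (\<Sum>j\<in>Y. G j)"
proof -
  let ?T = "TXY n X Y"
  have Ysub: "Y \<subseteq> {..<n}" and cY: "card Y = card X" using Y unfolding Ksub_def by auto
  have fY: "finite Y" using Ysub finite_subset by blast
  have piY: "p i \<in> Y" if "p \<in> ?T" for p using that i unfolding TXY_def by auto
  define c where "c j = (\<Sum>p\<in>?T. pind p i j)" for j
  have ceq: "c j = c j'" if j: "j \<in> Y" and j': "j' \<in> Y" for j j'
  proof -
    have "(\<Sum>p\<in>?T. 1 * pind p i j) = (\<Sum>p\<in>?T. 1 * pind p i j')"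
    proof (rule perm_count_eq[OF TXY_finite])
      fix p assume p: "p \<in> ?T"
      have jn: "j < n" "j' < n" using j j' Ysub by auto
      have "tr j j' \<circ> p \<in> Sym n" using p jn Sym_tr unfolding TXY_def by auto
      moreover have "(tr j j' \<circ> p) ` X = Y"
      proof -
        have "(tr j j' \<circ> p) ` X = tr j j' ` (p ` X)" by (rule image_comp[symmetric])
        also have "p ` X = Y" using p unfolding TXY_def by simp
        also have "tr j j' ` Y = Y" using j j' by (intro transpose_image_eq) simp
        finally show ?thesis .
      qed
      ultimately show "tr j j' \<circ> p \<in> ?T" unfolding TXY_def by simp
    qed simp
    thus ?thesis unfolding c_def by simp
  qed
  have Tne: "?T \<noteq> {}" by (rule TXY_ne[OF X Y])
  have sumc: "sum c Y = real (card ?T)"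
  proof -
    have "sum c Y = (\<Sum>p\<in>?T. \<Sum>j\<in>Y. pind p i j)" unfolding c_def by (rule sum.swap)
    also have "\<dots> = (\<Sum>p\<in>?T. 1)"
    proof (rule sum.cong[OF refl])
      fix p assume p: "p \<in> ?T"
      have "(\<Sum>j\<in>Y. pind p i j) = (\<Sum>j\<in>Y. if j = p i then 1 else 0)"
        unfolding pind_def by (intro sum.cong refl) auto
      also have "\<dots> = 1" using piY[OF p] fY by simp
      finally show "(\<Sum>j\<in>Y. pind p i j) = 1" .
    qed
    finally show ?thesis by simp
  qed
  have cval: "c j = real (card ?T) / real (card X)" if j: "j \<in> Y" for j
  proof -
    have "c j = sum c Y / card Y"
    proof (rule avg_const[OF fY _ j])
      fix x y assume "x \<in> Y" "y \<in> Y" thus "c x = c y" by (rule ceq)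
    qed
    thus ?thesis using sumc cY by simp
  qed
  have "(\<Sum>p\<in>?T. G (p i)) = (\<Sum>p\<in>?T. \<Sum>j\<in>Y. G j * pind p i j)"
  proof (rule sum.cong[OF refl])
    fix p assume p: "p \<in> ?T"
    have "(\<Sum>j\<in>Y. G j * pind p i j) = (\<Sum>j\<in>Y. if j = p i then G j else 0)"
      unfolding pind_def by (intro sum.cong refl) auto
    also have "\<dots> = G (p i)" using piY[OF p] fY by simp
    finally show "G (p i) = (\<Sum>j\<in>Y. G j * pind p i j)" by simp
  qed
  also have "\<dots> = (\<Sum>j\<in>Y. G j * c j)" unfolding c_def by (subst sum.swap) (simp add: sum_distrib_left)
  also have "\<dots> = (\<Sum>j\<in>Y. G j * (real (card ?T) / real (card X)))"
    by (intro sum.cong refl) (simp add: cval)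
  also have "\<dots> = (\<Sum>j\<in>Y. G j) * (real (card ?T) / real (card X))" by (rule sum_distrib_right[symmetric])
  finally show ?thesis by (simp only: mult.commute)
qed

context L begin

lemma ET1:
  assumes X: "X \<subseteq> {..<n}" and Y: "Y \<in> Ksub n (card X)"
  shows "measure_pmf.expectation (pmf_of_set (TXY n X Y)) (g1 n F X) = (\<Sum>i\<in>X. \<Sum>j\<in>Y. a i j) / real (card X)"
proof -
  let ?T = "TXY n X Y"
  have Tne: "?T \<noteq> {}" by (rule TXY_ne[OF X Y])
  have cT: "real (card ?T) > 0" using Tne TXY_finite card_gt_0_iff by auto
  have "(\<Sum>p\<in>?T. g1 n F X p) = (\<Sum>i\<in>X. \<Sum>p\<in>?T. a i (p i))"
    unfolding g1_def by (rule sum.swap)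
  also have "\<dots> = (\<Sum>i\<in>X. real (card ?T) / real (card X) * (\<Sum>j\<in>Y. a i j))"
    by (intro sum.cong refl T_first[OF X Y])
  also have "\<dots> = real (card ?T) * ((\<Sum>i\<in>X. \<Sum>j\<in>Y. a i j) / real (card X))"
    by (simp add: sum_distrib_left sum_divide_distrib)
  finally have e: "(\<Sum>p\<in>?T. g1 n F X p) = real (card ?T) * ((\<Sum>i\<in>X. \<Sum>j\<in>Y. a i j) / real (card X))" .
  show ?thesis using cT by (simp add: integral_pmf_of_set[OF Tne TXY_finite] e)
qed

lemma gfun_eq: "X \<subseteq> {..<n} \<Longrightarrow> gfun n F X p = Af p"
proof -
  assume X: "X \<subseteq> {..<n}"
  have "gfun n F X p = (\<Sum>i\<in>X. a i (p i)) + (\<Sum>i\<in>{..<n} - X. a i (p i))"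
    unfolding gfun_def g1_def g2_def by simp
  also have "\<dots> = (\<Sum>i<n. a i (p i))"
    using sum.subset_diff[of X "{..<n}" "\<lambda>i. a i (p i)"] X by simp
  finally show ?thesis unfolding Af_def .
qed

end

lemma mix_expect:
  fixes \<phi> :: "(nat \<Rightarrow> nat) \<Rightarrow> real"
  shows "measure_pmf.expectation (distR n) (\<lambda>(X,Y). measure_pmf.expectation (pmf_of_set (TXY n X Y)) \<phi>)
       = (\<Sum>p\<in>Sym n. \<phi> p) / fact n"
proof -
  have "measure_pmf.expectation (distR n) (\<lambda>(X,Y). measure_pmf.expectation (pmf_of_set (TXY n X Y)) \<phi>)
     = (\<Sum>X\<in>Pow {..<n}. (\<Sum>Y\<in>Ksub n (card X). measure_pmf.expectation (pmf_of_set (TXY n X Y)) \<phi>) / (2^n * real (n choose card X)))"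
    by (simp add: distR_expect)
  also have "\<dots> = (\<Sum>X\<in>Pow {..<n}. ((\<Sum>p\<in>Sym n. \<phi> p) / fact n) / 2^n)"
  proof (rule sum.cong[OF refl])
    fix X assume "X \<in> Pow {..<n}"
    hence X: "X \<subseteq> {..<n}" by simp
    have kn: "card X \<le> n" using X card_mono[of "{..<n}" X] by simp
    hence C0: "real (n choose card X) > 0" by simp
    have "(\<Sum>Y\<in>Ksub n (card X). measure_pmf.expectation (pmf_of_set (TXY n X Y)) \<phi>)
        = (\<Sum>Y\<in>Ksub n (card X). (\<Sum>p\<in>TXY n X Y. \<phi> p) * (real (n choose card X) / fact n))"
    proof (rule sum.cong[OF refl])
      fix Y assume Y: "Y \<in> Ksub n (card X)"
      show "measure_pmf.expectation (pmf_of_set (TXY n X Y)) \<phi> = (\<Sum>p\<in>TXY n X Y. \<phi> p) * (real (n choose card X) / fact n)"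
        using card_TXY[OF X Y] C0 by (simp add: integral_pmf_of_set[OF TXY_ne[OF X Y] TXY_finite])
    qed
    also have "\<dots> = (\<Sum>p\<in>Sym n. \<phi> p) * (real (n choose card X) / fact n)"
      by (subst sum_distrib_right[symmetric]) (simp only: mixture_sum[OF X])
    finally show "(\<Sum>Y\<in>Ksub n (card X). measure_pmf.expectation (pmf_of_set (TXY n X Y)) \<phi>) / (2^n * real (n choose card X))
        = ((\<Sum>p\<in>Sym n. \<phi> p) / fact n) / 2^n"
      using C0 by (simp add: field_simps)
  qed
  also have "\<dots> = (\<Sum>p\<in>Sym n. \<phi> p) / fact n" by (simp add: card_Pow)
  finally show ?thesis .
qed

lemma compl_card: "Y \<subseteq> {..<n} \<Longrightarrow> card ({..<n} - Y) = n - card Y"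
  by (simp add: card_Diff_subset finite_subset)

lemma Ksub_compl_bij:
  assumes k: "k \<le> n"
  shows "bij_betw (\<lambda>Y. {..<n} - Y) (Ksub n k) (Ksub n (n - k))"
proof (rule bij_betw_byWitness[where f'="\<lambda>Y. {..<n} - Y"])
  show "\<forall>Y\<in>Ksub n k. {..<n} - ({..<n} - Y) = Y" unfolding Ksub_def by auto
  show "\<forall>Y\<in>Ksub n (n - k). {..<n} - ({..<n} - Y) = Y" unfolding Ksub_def by auto
  show "(\<lambda>Y. {..<n} - Y) ` Ksub n k \<subseteq> Ksub n (n - k)"
    unfolding Ksub_def using compl_card by auto
  show "(\<lambda>Y. {..<n} - Y) ` Ksub n (n - k) \<subseteq> Ksub n k"
    unfolding Ksub_def using compl_card k by auto
qed

lemma distR_compl: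
  fixes h :: "nat set \<times> nat set \<Rightarrow> real"
  shows "measure_pmf.expectation (distR n) h = measure_pmf.expectation (distR n) (\<lambda>(X,Y). h ({..<n} - X, {..<n} - Y))"
proof -
  define W where "W X = (\<Sum>Y\<in>Ksub n (card X). h (X,Y)) / (2^n * real (n choose card X))" for X
  have "measure_pmf.expectation (distR n) (\<lambda>(X,Y). h ({..<n} - X, {..<n} - Y))
      = (\<Sum>X\<in>Pow {..<n}. (\<Sum>Y\<in>Ksub n (card X). h ({..<n} - X, {..<n} - Y)) / (2^n * real (n choose card X)))"
    by (simp add: distR_expect)
  also have "\<dots> = (\<Sum>X\<in>Pow {..<n}. W ({..<n} - X))"
  proof (rule sum.cong[OF refl])
    fix X assume "X \<in> Pow {..<n}"
    hence X: "X \<subseteq> {..<n}" by simp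
    have kn: "card X \<le> n" using X card_mono[of "{..<n}" X] by simp
    have cc: "card ({..<n} - X) = n - card X" by (rule compl_card[OF X])
    have "(\<Sum>Y\<in>Ksub n (card X). h ({..<n} - X, {..<n} - Y)) = (\<Sum>Y\<in>Ksub n (n - card X). h ({..<n} - X, Y))"
      by (rule sum.reindex_bij_betw[OF Ksub_compl_bij[OF kn]])
    moreover have "n choose card X = n choose (n - card X)" using kn by (rule binomial_symmetric)
    ultimately show "(\<Sum>Y\<in>Ksub n (card X). h ({..<n} - X, {..<n} - Y)) / (2^n * real (n choose card X)) = W ({..<n} - X)"
      unfolding W_def cc by simp
  qed
  also have "\<dots> = (\<Sum>X\<in>Pow {..<n}. W X)"
    by (rule sum_invol) auto
  also have "\<dots> = measure_pmf.expectation (distR n) h"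
    unfolding W_def by (simp add: distR_expect)
  finally show ?thesis by simp
qed

lemma TXY_compl:
  assumes X: "X \<subseteq> {..<n}" and Y: "Y \<subseteq> {..<n}"
  shows "TXY n ({..<n} - X) ({..<n} - Y) = TXY n X Y"
proof -
  have "p ` ({..<n} - X) = {..<n} - Y \<longleftrightarrow> p ` X = Y" if p: "p \<in> Sym n" for p
  proof -
    have pp: "p permutes {..<n}" using p unfolding Sym_def by simp
    have "p ` ({..<n} - X) = p ` {..<n} - p ` X" by (rule image_set_diff[OF permutes_inj[OF pp]])
    also have "p ` {..<n} = {..<n}" by (rule permutes_image[OF pp])
    finally have e: "p ` ({..<n} - X) = {..<n} - p ` X" .
    have pX: "p ` X \<subseteq> {..<n}" by (rule Sym_image_sub[OF p X])
    have d1: "{..<n} - ({..<n} - p ` X) = p ` X" by (rule double_diff[OF pX]) simp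
    have d2: "{..<n} - ({..<n} - Y) = Y" by (rule double_diff[OF Y]) simp
    show ?thesis unfolding e
    proof
      assume "{..<n} - p ` X = {..<n} - Y"
      hence "{..<n} - ({..<n} - p ` X) = {..<n} - ({..<n} - Y)" by simp
      thus "p ` X = Y" unfolding d1 d2 .
    qed simp
  qed
  thus ?thesis unfolding TXY_def by auto
qed

lemma g1_compl: "g1 n F ({..<n} - X) = g2 n F X"
  unfolding g1_def g2_def by (rule ext) simp

lemma tr_lt: "a < n \<Longrightarrow> b < n \<Longrightarrow> x < n \<Longrightarrow> tr a b x < n"
  by (auto simp: Transposition.transpose_def)

lemma tr_image_sub: "a < n \<Longrightarrow> b < n \<Longrightarrow> X \<subseteq> {..<n} \<Longrightarrow> tr a b ` X \<subseteq> {..<n}"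
  using tr_lt by auto

lemma symfam_Ksub: "symfam n (Ksub n k) (\<lambda>_. 1)"
  unfolding symfam_def Ksub_def
  using tr_image_sub tr_image_card
  by (auto intro: finite_subset[of _ "Pow {..<n}"])

lemma symfam_Pow: "symfam n (Pow {..<n}) (\<lambda>X. g (card X))"
  unfolding symfam_def using tr_image_sub tr_image_card by auto

lemma sq_exp: "(x / k + A)^2 = (1/k^2) * x^2 + (2*A/k) * x + (A::real)^2"
proof (cases "k = 0")
  case True thus ?thesis by simp
next
  case False thus ?thesis by (simp add: power2_eq_square field_simps)
qed

context L begin

definition D1 :: "nat set \<Rightarrow> nat set \<Rightarrow> real" where
  "D1 X Y = (\<Sum>i\<in>X. \<Sum>j\<in>Y. a i j) / real (card X) - m / 2"

definition r :: "nat set \<Rightarrow> nat \<Rightarrow> real" where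
  "r X j = (\<Sum>i\<in>X. b i j)"

lemma r_sum0: "X \<subseteq> {..<n} \<Longrightarrow> (\<Sum>j<n. r X j) = 0"
proof -
  assume X: "X \<subseteq> {..<n}"
  have "(\<Sum>j<n. r X j) = (\<Sum>i\<in>X. \<Sum>j<n. b i j)" unfolding r_def by (rule sum.swap)
  also have "\<dots> = 0"
  proof (rule sum.neutral, rule ballI)
    fix i assume "i \<in> X" hence "i < n" using X by auto
    thus "(\<Sum>j<n. b i j) = 0" by (rule b_row)
  qed
  finally show ?thesis .
qed

lemma D1_form:
  assumes X: "X \<subseteq> {..<n}" and Y: "Y \<in> Ksub n (card X)"
  shows "D1 X Y = (\<Sum>j\<in>Y. r X j) / real (card X) + m * (real (card X) / real n - 1/2)"
proof -
  have cY: "card Y = card X" using Y unfolding Ksub_def by auto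
  have "(\<Sum>i\<in>X. \<Sum>j\<in>Y. a i j) = (\<Sum>i\<in>X. \<Sum>j\<in>Y. b i j + m / real n)"
    unfolding b_def by simp
  also have "\<dots> = (\<Sum>j\<in>Y. r X j) + real (card X) * real (card X) * (m / real n)"
    unfolding r_def by (simp add: sum.distrib cY sum.swap[of _ X Y])
  finally have e: "(\<Sum>i\<in>X. \<Sum>j\<in>Y. a i j) = (\<Sum>j\<in>Y. r X j) + real (card X) * real (card X) * (m / real n)" .
  show ?thesis
  proof (cases "card X = 0")
    case True
    hence "X = {}" using X finite_subset by fastforce
    thus ?thesis unfolding D1_def by simp
  next
    case False
    thus ?thesis unfolding D1_def e using n_pos by (simp add: field_simps)
  qed
qed

lemma Ysum_D1:
  assumes X: "X \<subseteq> {..<n}"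
  shows "(\<Sum>Y\<in>Ksub n (card X). (D1 X Y)^2) =
    real (n choose card X) * ((real n - real (card X)) / (real (card X) * real n * (real n - 1)) * (\<Sum>j<n. (r X j)^2)
      + m^2 * (real (card X) / real n - 1/2)^2)"
proof -
  let ?k = "real (card X)"
  let ?K = "Ksub n (card X)"
  let ?C = "real (n choose card X)"
  define A where "A = m * (?k / real n - 1/2)"
  define SY where "SY Y = (\<Sum>j\<in>Y. r X j)" for Y
  have cK: "real (card ?K) = ?C" by (simp add: Ksub_card)
  have m1: "(\<Sum>Y\<in>?K. SY Y) = 0"
    using moment1[OF symfam_Ksub r_sum0[OF X]] unfolding SY_def by simp
  have m2: "(\<Sum>Y\<in>?K. (SY Y)^2) = ?C * ?k * (real n - ?k) / (real n * (real n - 1)) * (\<Sum>j<n. (r X j)^2)"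
  proof -
    have "(\<Sum>Y\<in>?K. 1 * (SY Y)^2) = (\<Sum>Y\<in>?K. 1 * real (card Y) * (real n - real (card Y))) / (real n * (real n - 1)) * (\<Sum>j<n. (r X j)^2)"
      unfolding SY_def by (rule moment2[OF symfam_Ksub n2 r_sum0[OF X]])
    also have "(\<Sum>Y\<in>?K. 1 * real (card Y) * (real n - real (card Y))) = (\<Sum>Y\<in>?K. ?k * (real n - ?k))"
      by (intro sum.cong refl) (simp add: Ksub_def)
    also have "\<dots> = ?C * (?k * (real n - ?k))" using cK by simp
    finally show ?thesis by simp
  qed
  have "(\<Sum>Y\<in>?K. (D1 X Y)^2) = (\<Sum>Y\<in>?K. (1 / ?k^2) * (SY Y)^2 + (2 * A / ?k) * SY Y + A^2)"
  proof (rule sum.cong[OF refl])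
    fix Y assume Y: "Y \<in> ?K"
    show "(D1 X Y)^2 = (1 / ?k^2) * (SY Y)^2 + (2 * A / ?k) * SY Y + A^2"
      unfolding D1_form[OF X Y] SY_def A_def by (rule sq_exp)
  qed
  also have "\<dots> = (1 / ?k^2) * (\<Sum>Y\<in>?K. (SY Y)^2) + (2 * A / ?k) * (\<Sum>Y\<in>?K. SY Y) + ?C * A^2"
    by (simp add: sum.distrib sum_distrib_left cK)
  also have "\<dots> = ?C * ((real n - ?k) / (?k * real n * (real n - 1)) * (\<Sum>j<n. (r X j)^2) + m^2 * (?k / real n - 1/2)^2)"
  proof (cases "card X = 0")
    case True thus ?thesis unfolding m2 m1 A_def by (simp add: power2_eq_square)
  next
    case False
    hence "?k \<noteq> 0" by simp
    thus ?thesis unfolding m2 m1 A_def using n2 by (simp add: power2_eq_square field_simps)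
  qed
  finally show ?thesis .
qed

lemma Xsum_phiR:
  "(\<Sum>X\<in>Pow {..<n}. (real n - real (card X)) / real (card X) * (\<Sum>j<n. (r X j)^2))
    \<le> 2^n * real n * (real n + 1) / 4 / (real n * (real n - 1)) * Bsum"
proof -
  define \<phi> where "\<phi> X = (real n - real (card X)) / real (card X)" for X :: "nat set"
  define Q where "Q = (\<Sum>X\<in>Pow {..<n}. \<phi> X * real (card X) * (real n - real (card X)))"
  have sf: "symfam n (Pow {..<n}) \<phi>" unfolding \<phi>_def by (rule symfam_Pow)
  have "(\<Sum>X\<in>Pow {..<n}. \<phi> X * (\<Sum>j<n. (r X j)^2)) = (\<Sum>j<n. \<Sum>X\<in>Pow {..<n}. \<phi> X * (\<Sum>i\<in>X. b i j)^2)"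
    unfolding r_def by (simp add: sum_distrib_left sum.swap[of _ "Pow {..<n}"])
  also have "\<dots> = (\<Sum>j<n. Q / (real n * (real n - 1)) * (\<Sum>i<n. (b i j)^2))"
  proof (rule sum.cong[OF refl])
    fix j assume "j \<in> {..<n}"
    hence "(\<Sum>i<n. b i j) = 0" by (simp add: b_col)
    thus "(\<Sum>X\<in>Pow {..<n}. \<phi> X * (\<Sum>i\<in>X. b i j)^2) = Q / (real n * (real n - 1)) * (\<Sum>i<n. (b i j)^2)"
      unfolding Q_def by (rule moment2[OF sf n2])
  qed
  also have "\<dots> = Q / (real n * (real n - 1)) * (\<Sum>j<n. \<Sum>i<n. (b i j)^2)"
    by (rule sum_distrib_left[symmetric])
  also have "\<dots> = Q / (real n * (real n - 1)) * Bsum"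
  proof -
    have sw: "(\<Sum>j<n. \<Sum>i<n. (b i j)^2) = Bsum" unfolding Bsum_def by (rule sum.swap)
    show ?thesis by (simp only: sw)
  qed
  also have "\<dots> \<le> 2^n * real n * (real n + 1) / 4 / (real n * (real n - 1)) * Bsum"
  proof -
    have "Q \<le> (\<Sum>X\<in>Pow {..<n}. (real n - real (card X))^2)"
      unfolding Q_def
    proof (rule sum_mono)
      fix X assume "X \<in> Pow {..<n}"
      show "\<phi> X * real (card X) * (real n - real (card X)) \<le> (real n - real (card X))^2"
      proof (cases "card X = 0")
        case True thus ?thesis unfolding \<phi>_def by simp
      next
        case False thus ?thesis unfolding \<phi>_def by (simp add: power2_eq_square)
      qed
    qed
    also have "\<dots> = 2^n * real n * (real n + 1) / 4" by (rule Pow_C1)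
    finally have "Q \<le> 2^n * real n * (real n + 1) / 4" .
    moreover have "real n * (real n - 1) > 0" using n2 by simp
    ultimately show ?thesis using Bsum_nonneg
      by (intro mult_right_mono divide_right_mono) auto
  qed
  finally show ?thesis unfolding \<phi>_def .
qed

lemma ER_D1_eq:
  "measure_pmf.expectation (distR n) (\<lambda>(X,Y). (D1 X Y)^2) =
    (\<Sum>X\<in>Pow {..<n}. (real n - real (card X)) / real (card X) * (\<Sum>j<n. (r X j)^2) / (real n * (real n - 1))
       + m^2 * (real (card X) / real n - 1/2)^2) / 2^n"
proof -
  have "measure_pmf.expectation (distR n) (\<lambda>(X,Y). (D1 X Y)^2) =
        (\<Sum>X\<in>Pow {..<n}. (\<Sum>Y\<in>Ksub n (card X). (D1 X Y)^2) / (2^n * real (n choose card X)))"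
    by (simp add: distR_expect)
  also have "\<dots> = (\<Sum>X\<in>Pow {..<n}. ((real n - real (card X)) / real (card X) * (\<Sum>j<n. (r X j)^2) / (real n * (real n - 1))
       + m^2 * (real (card X) / real n - 1/2)^2) / 2^n)"
  proof (rule sum.cong[OF refl])
    fix X assume "X \<in> Pow {..<n}"
    hence X: "X \<subseteq> {..<n}" by simp
    have kn: "card X \<le> n" using X card_mono[of "{..<n}" X] by simp
    hence C0: "real (n choose card X) > 0" by simp
    have e: "(real n - real (card X)) / (real (card X) * real n * (real n - 1)) =
             (real n - real (card X)) / real (card X) / (real n * (real n - 1))" by (simp add: field_simps)
    show "(\<Sum>Y\<in>Ksub n (card X). (D1 X Y)^2) / (2^n * real (n choose card X)) =
       ((real n - real (card X)) / real (card X) * (\<Sum>j<n. (r X j)^2) / (real n * (real n - 1))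
       + m^2 * (real (card X) / real n - 1/2)^2) / 2^n"
      unfolding Ysum_D1[OF X] e using C0 by (simp add: field_simps)
  qed
  also have "\<dots> = (\<Sum>X\<in>Pow {..<n}. (real n - real (card X)) / real (card X) * (\<Sum>j<n. (r X j)^2) / (real n * (real n - 1))
       + m^2 * (real (card X) / real n - 1/2)^2) / 2^n"
    by (rule sum_divide_distrib[symmetric])
  finally show ?thesis .
qed

lemma ER_D1: "measure_pmf.expectation (distR n) (\<lambda>(X,Y). (D1 X Y)^2) \<le> 1 / real n"
proof -
  define N where "N = real n"
  have N2: "N \<ge> 2" unfolding N_def using n2 by simp
  define P where "P = (\<Sum>X\<in>Pow {..<n}. (real n - real (card X)) / real (card X) * (\<Sum>j<n. (r X j)^2))"
  have "(\<Sum>X\<in>Pow {..<n}. (real n - real (card X)) / real (card X) * (\<Sum>j<n. (r X j)^2) / (real n * (real n - 1))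
       + m^2 * (real (card X) / real n - 1/2)^2) = P / (N * (N - 1)) + m^2 * (2^n / (4 * N))"
  proof -
    have "(\<Sum>X\<in>Pow {..<n}. (real n - real (card X)) / real (card X) * (\<Sum>j<n. (r X j)^2) / (real n * (real n - 1))
       + m^2 * (real (card X) / real n - 1/2)^2) =
       (\<Sum>X\<in>Pow {..<n}. (real n - real (card X)) / real (card X) * (\<Sum>j<n. (r X j)^2) / (real n * (real n - 1)))
       + (\<Sum>X\<in>Pow {..<n}. m^2 * (real (card X) / real n - 1/2)^2)"
      by (rule sum.distrib)
    also have "(\<Sum>X\<in>Pow {..<n}. (real n - real (card X)) / real (card X) * (\<Sum>j<n. (r X j)^2) / (real n * (real n - 1)))
       = P / (N * (N - 1))" unfolding P_def N_def by (rule sum_divide_distrib[symmetric])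
    also have "(\<Sum>X\<in>Pow {..<n}. m^2 * (real (card X) / real n - 1/2)^2) = m^2 * (\<Sum>X\<in>Pow {..<n}. (real (card X) / real n - 1/2)^2)"
      by (rule sum_distrib_left[symmetric])
    also have "(\<Sum>X\<in>Pow {..<n}. (real (card X) / real n - 1/2)^2) = 2^n / (4 * N)"
      unfolding N_def by (rule Pow_C2) (use n2 in simp)
    finally show ?thesis .
  qed
  hence E: "measure_pmf.expectation (distR n) (\<lambda>(X,Y). (D1 X Y)^2) = (P / (N * (N - 1)) + m^2 * (2^n / (4 * N))) / 2^n"
    using ER_D1_eq by simp
  have P: "P \<le> 2^n * N * (N + 1) / 4 / (N * (N - 1)) * Bsum" unfolding P_def N_def by (rule Xsum_phiR)
  have KB: "m^2 + Bsum / (N - 1) \<le> 1" unfolding N_def by (rule key_bound)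
  have B0: "Bsum \<ge> 0" by (rule Bsum_nonneg)
  have Npos: "N - 1 > 0" using N2 by simp
  define t where "t = Bsum / (N - 1)"
  have t0: "t \<ge> 0" unfolding t_def using B0 Npos by simp
  have Bt: "Bsum = t * (N - 1)" unfolding t_def using Npos by simp
  have "(P / (N * (N - 1)) + m^2 * (2^n / (4 * N))) / 2^n \<le>
        ((2^n * N * (N + 1) / 4 / (N * (N - 1)) * Bsum) / (N * (N - 1)) + m^2 * (2^n / (4 * N))) / 2^n"
    using P N2 by (intro divide_right_mono add_right_mono) auto
  also have "\<dots> = (N + 1) * t / (4 * N * (N - 1)) + m^2 / (4 * N)"
  proof -
    have nz: "N \<noteq> 0" "N - 1 \<noteq> 0" "(2::real)^n \<noteq> 0" using N2 by auto
    have e1: "2^n * N * (N + 1) / 4 / (N * (N - 1)) * (t * (N - 1)) = 2^n * (N + 1) * t / 4"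
      using nz by (simp add: field_simps)
    have e2: "(2^n * (N + 1) * t / 4) / (N * (N - 1)) / 2^n = (N + 1) * t / (4 * N * (N - 1))"
      using nz by (simp add: field_simps)
    have "(2^n * N * (N + 1) / 4 / (N * (N - 1)) * (t * (N - 1))) / (N * (N - 1)) / 2^n = (N + 1) * t / (4 * N * (N - 1))"
      unfolding e1 e2 ..
    moreover have "m^2 * (2^n / (4 * N)) / 2^n = m^2 / (4 * N)" using nz by (simp add: field_simps)
    ultimately show ?thesis unfolding Bt by (simp add: add_divide_distrib)
  qed
  also have "\<dots> \<le> (N + 1) * t / (4 * N * (N - 1)) + m^2 * (N + 1) / (4 * N * (N - 1))"
  proof -
    have "m^2 / (4 * N) \<le> m^2 * (N + 1) / (4 * N * (N - 1))"
      using N2 Npos by (simp add: field_simps mult_left_mono)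
    thus ?thesis by simp
  qed
  also have "\<dots> = (N + 1) * (t + m^2) / (4 * N * (N - 1))" by (simp add: add_divide_distrib[symmetric] algebra_simps)
  also have "\<dots> \<le> (N + 1) * 1 / (4 * N * (N - 1))"
    using KB N2 Npos unfolding t_def by (intro divide_right_mono mult_left_mono) auto
  also have "\<dots> \<le> 1 / N" using N2 Npos by (simp add: field_simps)
  finally show ?thesis using E unfolding N_def by simp
qed

end

lemma ER_mono:
  fixes h h' :: "nat set \<times> nat set \<Rightarrow> real"
  assumes "\<And>X Y. X \<subseteq> {..<n} \<Longrightarrow> Y \<in> Ksub n (card X) \<Longrightarrow> h (X,Y) \<le> h' (X,Y)"
  shows "measure_pmf.expectation (distR n) h \<le> measure_pmf.expectation (distR n) h'"
  unfolding distR_expect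
proof (rule sum_mono)
  fix X assume "X \<in> Pow {..<n}"
  hence X: "X \<subseteq> {..<n}" by simp
  have "(\<Sum>Y\<in>Ksub n (card X). h (X, Y)) \<le> (\<Sum>Y\<in>Ksub n (card X). h' (X, Y))"
    by (rule sum_mono) (rule assms[OF X])
  thus "(\<Sum>Y\<in>Ksub n (card X). h (X, Y)) / (2 ^ n * real (n choose card X))
      \<le> (\<Sum>Y\<in>Ksub n (card X). h' (X, Y)) / (2 ^ n * real (n choose card X))"
    by (rule divide_right_mono) simp
qed

lemma ER_diff:
  fixes h h' :: "nat set \<times> nat set \<Rightarrow> real"
  shows "measure_pmf.expectation (distR n) (\<lambda>x. h x - h' x) = measure_pmf.expectation (distR n) h - measure_pmf.expectation (distR n) h'"
  unfolding distR_expect by (simp add: sum_subtractf diff_divide_distrib)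

lemma ER_div:
  fixes h :: "nat set \<times> nat set \<Rightarrow> real"
  shows "measure_pmf.expectation (distR n) (\<lambda>x. h x / c) = measure_pmf.expectation (distR n) h / c"
proof -
  have e: "(\<Sum>Y\<in>Ksub n (card X). h (X, Y) / c) / (2 ^ n * real (n choose card X)) =
       ((\<Sum>Y\<in>Ksub n (card X). h (X, Y)) / (2 ^ n * real (n choose card X))) / c" for X
    by (simp add: sum_divide_distrib[symmetric])
  show ?thesis unfolding distR_expect e by (rule sum_divide_distrib[symmetric])
qed

lemma prob_ER: "measure_pmf.prob (distR n) A = measure_pmf.expectation (distR n) (indicator A)"
  using Bochner_Integration.integral_indicator[of "measure_pmf (distR n)" A] by simp

lemma EM_mono:
  fixes h h' :: "'a \<Rightarrow> real"
  assumes "finite T" "T \<noteq> {}" "\<And>p. p \<in> T \<Longrightarrow> h p \<le> h' p"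
  shows "measure_pmf.expectation (pmf_of_set T) h \<le> measure_pmf.expectation (pmf_of_set T) h'"
  unfolding integral_pmf_of_set[OF assms(2,1)]
  by (rule divide_right_mono) (auto intro: sum_mono assms(3))

lemma AB:
  fixes g :: "'a \<Rightarrow> real"
  assumes T: "finite T" "T \<noteq> {}" and t: "t > 0"
    and E: "measure_pmf.expectation (pmf_of_set T) (\<lambda>p. (\<bar>g p\<bar> - 1)^2) \<le> t^2 * s"
  shows "almost_boolean (pmf_of_set T) g s t"
proof -
  let ?M = "pmf_of_set T"
  let ?A = "{x. \<bar>\<bar>g x\<bar> - 1\<bar> \<le> t}"
  have "measure_pmf.prob ?M ?A = measure_pmf.expectation ?M (indicator ?A)"
    using Bochner_Integration.integral_indicator[of "measure_pmf ?M" ?A] by simp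
  also have "\<dots> \<ge> measure_pmf.expectation ?M (\<lambda>p. 1 - (\<bar>g p\<bar> - 1)^2 / t^2)"
  proof (rule EM_mono[OF T])
    fix p
    show "1 - (\<bar>g p\<bar> - 1)^2 / t^2 \<le> indicator ?A p"
    proof (cases "\<bar>\<bar>g p\<bar> - 1\<bar> \<le> t")
      case True thus ?thesis using t by (simp add: indicator_def)
    next
      case False
      hence "t^2 \<le> (\<bar>g p\<bar> - 1)^2" using t
        by (metis abs_le_square_iff less_imp_le not_le abs_of_pos)
      hence "1 \<le> (\<bar>g p\<bar> - 1)^2 / t^2" using t by simp
      thus ?thesis using False by (simp add: indicator_def)
    qed
  qed
  also have "measure_pmf.expectation ?M (\<lambda>p. 1 - (\<bar>g p\<bar> - 1)^2 / t^2) =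
      1 - measure_pmf.expectation ?M (\<lambda>p. (\<bar>g p\<bar> - 1)^2) / t^2"
    unfolding integral_pmf_of_set[OF T(2,1)] using T
    by (simp add: sum_subtractf sum_divide_distrib[symmetric] diff_divide_distrib)
  also have "\<dots> \<ge> 1 - s"
  proof -
    have "measure_pmf.expectation ?M (\<lambda>p. (\<bar>g p\<bar> - 1)^2) / t^2 \<le> s"
      using E t by (simp add: divide_le_eq mult.commute)
    thus ?thesis by simp
  qed
  finally show ?thesis unfolding almost_boolean_def by simp
qed

lemma sq_abs_le: "\<bar>x\<bar> \<le> \<bar>y\<bar> \<Longrightarrow> x^2 \<le> (y::real)^2"
  by (simp add: abs_le_square_iff)

context L begin

lemma Af_dev: "(\<bar>Af p\<bar> - 1)^2 \<le> (f p - Af p)^2"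
proof -
  have "\<bar>\<bar>Af p\<bar> - \<bar>f p\<bar>\<bar> \<le> \<bar>Af p - f p\<bar>" by (rule abs_triangle_ineq3)
  hence "\<bar>\<bar>Af p\<bar> - 1\<bar> \<le> \<bar>f p - Af p\<bar>" using f_pm1[of p] by simp
  thus ?thesis by (rule sq_abs_le)
qed

lemma EZ_bound:
  "measure_pmf.expectation (distR n) (\<lambda>(X,Y). measure_pmf.expectation (pmf_of_set (TXY n X Y)) (\<lambda>p. (\<bar>Af p\<bar> - 1)^2))
     \<le> fam_eps n F"
proof -
  have "measure_pmf.expectation (distR n) (\<lambda>(X,Y). measure_pmf.expectation (pmf_of_set (TXY n X Y)) (\<lambda>p. (\<bar>Af p\<bar> - 1)^2))
     = (\<Sum>p\<in>Sym n. (\<bar>Af p\<bar> - 1)^2) / fact n" by (rule mix_expect)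
  also have "\<dots> \<le> (\<Sum>p\<in>Sym n. (f p - Af p)^2) / fact n"
    by (intro divide_right_mono sum_mono Af_dev) simp
  also have "\<dots> = fam_eps n F" by (rule eps_eq[symmetric])
  finally show ?thesis .
qed

lemma Q1_eq:
  assumes X: "X \<subseteq> {..<n}" and Y: "Y \<in> Ksub n (card X)"
  shows "measure_pmf.expectation (pmf_of_set (TXY n X Y)) (g1 n F X) - (fam_c n F - 1/2) = D1 X Y"
  unfolding ET1[OF X Y] D1_def by (simp add: field_simps)

lemma Q2_eq:
  assumes X: "X \<subseteq> {..<n}" and Y: "Y \<in> Ksub n (card X)"
  shows "measure_pmf.expectation (pmf_of_set (TXY n X Y)) (g2 n F X) - (fam_c n F - 1/2) = D1 ({..<n} - X) ({..<n} - Y)"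
proof -
  have Ys: "Y \<subseteq> {..<n}" and cY: "card Y = card X" using Y unfolding Ksub_def by auto
  have X': "{..<n} - X \<subseteq> {..<n}" by auto
  have Y': "{..<n} - Y \<in> Ksub n (card ({..<n} - X))"
    unfolding Ksub_def using compl_card[OF X] compl_card[OF Ys] cY by auto
  have "measure_pmf.expectation (pmf_of_set (TXY n X Y)) (g2 n F X) =
        measure_pmf.expectation (pmf_of_set (TXY n ({..<n} - X) ({..<n} - Y))) (g1 n F ({..<n} - X))"
    unfolding TXY_compl[OF X Ys] g1_compl ..
  thus ?thesis using Q1_eq[OF X' Y'] by simp
qed

end

theorem lemma2p4:
  fixes n :: nat and F :: "(nat \<Rightarrow> nat) set"
  assumes "n \<ge> 2"
    and "F \<subseteq> Sym n"
    and "fam_eps n F \<ge> real n powr (-7/3)"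
  shows "measure_pmf.prob (distR n)
           {(X, Y). let e = fam_eps n F; M = pmf_of_set (TXY n X Y) in
              almost_boolean M (gfun n F X) (e powr (4/7)) (e powr (1/7))
            \<and> \<bar>measure_pmf.expectation M (g1 n F X) - (fam_c n F - 1/2)\<bar> \<le> e powr (1/7)
            \<and> \<bar>measure_pmf.expectation M (g2 n F X) - (fam_c n F - 1/2)\<bar> \<le> e powr (1/7)
            \<and> measure_pmf.expectation M (\<lambda>p. (\<bar>gfun n F X p\<bar> - 1)^2) \<le> e powr (6/7)}
         \<ge> 1 - 3 * fam_eps n F powr (1/7)"
proof -
  interpret L n F using assms(1,2) by unfold_locales
  define e where "e = fam_eps n F"
  have npos: "real n > 0" using assms(1) by simp
  have epos: "e > 0" using assms(3) npos unfolding e_def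
  proof -
    have "real n powr (-7/3) > 0" using npos by simp
    thus "fam_eps n F > 0" using assms(3) by linarith
  qed
  define t where "t = e powr (1/7)"
  have tpos: "t > 0" unfolding t_def using epos by simp
  have t2: "t^2 = e powr (2/7)"
    unfolding t_def power2_eq_square powr_add[symmetric] by simp
  have e6: "e powr (6/7) = t^2 * e powr (4/7)" unfolding t2 powr_add[symmetric] by simp
  have e1: "e / e powr (6/7) = t"
  proof -
    have "e powr 1 / e powr (6/7) = e powr (1 - 6/7)" by (rule powr_diff[symmetric])
    thus ?thesis unfolding t_def using epos by simp
  qed
  have e3: "1 / real n \<le> e powr (3/7)"
  proof -
    have "(real n powr (-7/3)) powr (3/7) \<le> e powr (3/7)"
      using assms(3) unfolding e_def by (intro powr_mono2) auto
    moreover have "(real n powr (-7/3)) powr (3/7) = 1 / real n"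
      unfolding powr_powr using npos by (simp add: powr_neg_one)
    ultimately show ?thesis by simp
  qed
  have e3t: "(1 / real n) / t^2 \<le> t"
  proof -
    have "(1 / real n) / t^2 \<le> e powr (3/7) / t^2" by (rule divide_right_mono[OF e3]) simp
    also have "e powr (3/7) / t^2 = t"
    proof -
      have "e powr (3/7) / e powr (2/7) = e powr (3/7 - 2/7)" by (rule powr_diff[symmetric])
      thus ?thesis by (subst t2) (simp add: t_def)
    qed
    finally show ?thesis .
  qed
  let ?E = "\<lambda>X Y. pmf_of_set (TXY n X Y)"
  define Zc where "Zc X Y = measure_pmf.expectation (?E X Y) (\<lambda>p. (\<bar>gfun n F X p\<bar> - 1)^2)" for X Y
  define Bc where "Bc = {(X,Y). Zc X Y > e powr (6/7)}"
  define B1 where "B1 = {(X,Y). \<bar>measure_pmf.expectation (?E X Y) (g1 n F X) - (fam_c n F - 1/2)\<bar> > t}"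
  define B2 where "B2 = {(X,Y). \<bar>measure_pmf.expectation (?E X Y) (g2 n F X) - (fam_c n F - 1/2)\<bar> > t}"
  let ?G = "{(X, Y). let e = fam_eps n F; M = pmf_of_set (TXY n X Y) in
              almost_boolean M (gfun n F X) (e powr (4/7)) (e powr (1/7))
            \<and> \<bar>measure_pmf.expectation M (g1 n F X) - (fam_c n F - 1/2)\<bar> \<le> e powr (1/7)
            \<and> \<bar>measure_pmf.expectation M (g2 n F X) - (fam_c n F - 1/2)\<bar> \<le> e powr (1/7)
            \<and> measure_pmf.expectation M (\<lambda>p. (\<bar>gfun n F X p\<bar> - 1)^2) \<le> e powr (6/7)}"
  have good: "(X,Y) \<in> ?G" if X: "X \<subseteq> {..<n}" and Y: "Y \<in> Ksub n (card X)"
    and nc: "(X,Y) \<notin> Bc" and n1: "(X,Y) \<notin> B1" and n2': "(X,Y) \<notin> B2" for X Y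
  proof -
    have Zle: "Zc X Y \<le> e powr (6/7)" using nc unfolding Bc_def by auto
    have ab: "almost_boolean (?E X Y) (gfun n F X) (e powr (4/7)) t"
      by (rule AB[OF TXY_finite TXY_ne[OF X Y] tpos]) (use Zle e6 in \<open>simp add: Zc_def\<close>)
    show ?thesis using ab Zle n1 n2' unfolding B1_def B2_def Zc_def e_def t_def Let_def by auto
  qed
  have ind: "1 - indicator Bc (X,Y) - indicator B1 (X,Y) - indicator B2 (X,Y) \<le> (indicator ?G (X,Y) :: real)"
    if X: "X \<subseteq> {..<n}" and Y: "Y \<in> Ksub n (card X)" for X Y
  proof (cases "(X,Y) \<in> Bc \<or> (X,Y) \<in> B1 \<or> (X,Y) \<in> B2")
    case True thus ?thesis by (auto simp: indicator_def)
  next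
    case False
    hence "(X,Y) \<in> ?G" using good[OF X Y] by blast
    thus ?thesis using False by (simp add: indicator_def)
  qed
  have pBc: "measure_pmf.expectation (distR n) (indicator Bc :: nat set \<times> nat set \<Rightarrow> real) \<le> t"
  proof -
    have "measure_pmf.expectation (distR n) (indicator Bc :: nat set \<times> nat set \<Rightarrow> real) \<le>
          measure_pmf.expectation (distR n) (\<lambda>x. (\<lambda>(X,Y). measure_pmf.expectation (?E X Y) (\<lambda>p. (\<bar>Af p\<bar> - 1)^2)) x / e powr (6/7))"
    proof (rule ER_mono)
      fix X Y assume X: "X \<subseteq> {..<n}" and Y: "Y \<in> Ksub n (card X)"
      have zc: "Zc X Y = measure_pmf.expectation (?E X Y) (\<lambda>p. (\<bar>Af p\<bar> - 1)^2)"
        unfolding Zc_def gfun_eq[OF X] ..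
      have z0: "Zc X Y \<ge> 0" unfolding Zc_def by simp
      have ep: "e powr (6/7) > 0" using epos by simp
      show "indicator Bc (X,Y) \<le> (\<lambda>x. (\<lambda>(X,Y). measure_pmf.expectation (?E X Y) (\<lambda>p. (\<bar>Af p\<bar> - 1)^2)) x / e powr (6/7)) (X,Y)"
      proof (cases "(X,Y) \<in> Bc")
        case True
        hence "Zc X Y > e powr (6/7)" unfolding Bc_def by simp
        thus ?thesis using True ep unfolding zc by (simp add: indicator_def)
      next
        case False thus ?thesis using z0 ep unfolding zc by (simp add: indicator_def)
      qed
    qed
    also have "\<dots> = measure_pmf.expectation (distR n) (\<lambda>(X,Y). measure_pmf.expectation (?E X Y) (\<lambda>p. (\<bar>Af p\<bar> - 1)^2)) / e powr (6/7)"
      by (rule ER_div)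
    also have "\<dots> \<le> e / e powr (6/7)"
      using EZ_bound epos unfolding e_def by (simp add: divide_right_mono)
    also have "\<dots> = t" by (rule e1)
    finally show ?thesis .
  qed
  have pB1: "measure_pmf.expectation (distR n) (indicator B1 :: nat set \<times> nat set \<Rightarrow> real) \<le> t"
  proof -
    have "measure_pmf.expectation (distR n) (indicator B1 :: nat set \<times> nat set \<Rightarrow> real) \<le>
          measure_pmf.expectation (distR n) (\<lambda>x. (\<lambda>(X,Y). (D1 X Y)^2) x / t^2)"
    proof (rule ER_mono)
      fix X Y assume X: "X \<subseteq> {..<n}" and Y: "Y \<in> Ksub n (card X)"
      show "indicator B1 (X,Y) \<le> (\<lambda>x. (\<lambda>(X,Y). (D1 X Y)^2) x / t^2) (X,Y)"
      proof (cases "(X,Y) \<in> B1")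
        case True
        hence "\<bar>D1 X Y\<bar> > t" unfolding B1_def using Q1_eq[OF X Y] by simp
        hence "t^2 \<le> (D1 X Y)^2" using tpos by (intro sq_abs_le) simp
        thus ?thesis using True tpos by (simp add: indicator_def)
      next
        case False thus ?thesis by (simp add: indicator_def)
      qed
    qed
    also have "\<dots> = measure_pmf.expectation (distR n) (\<lambda>(X,Y). (D1 X Y)^2) / t^2" by (rule ER_div)
    also have "\<dots> \<le> (1 / real n) / t^2" by (rule divide_right_mono[OF ER_D1]) simp
    also have "\<dots> \<le> t" by (rule e3t)
    finally show ?thesis .
  qed
  have pB2: "measure_pmf.expectation (distR n) (indicator B2 :: nat set \<times> nat set \<Rightarrow> real) \<le> t"
  proof -
    have "measure_pmf.expectation (distR n) (indicator B2 :: nat set \<times> nat set \<Rightarrow> real) \<le>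
          measure_pmf.expectation (distR n) (\<lambda>x. (\<lambda>(X,Y). (D1 ({..<n} - X) ({..<n} - Y))^2) x / t^2)"
    proof (rule ER_mono)
      fix X Y assume X: "X \<subseteq> {..<n}" and Y: "Y \<in> Ksub n (card X)"
      show "indicator B2 (X,Y) \<le> (\<lambda>x. (\<lambda>(X,Y). (D1 ({..<n} - X) ({..<n} - Y))^2) x / t^2) (X,Y)"
      proof (cases "(X,Y) \<in> B2")
        case True
        hence "\<bar>D1 ({..<n} - X) ({..<n} - Y)\<bar> > t" unfolding B2_def using Q2_eq[OF X Y] by simp
        hence "t^2 \<le> (D1 ({..<n} - X) ({..<n} - Y))^2" using tpos by (intro sq_abs_le) simp
        thus ?thesis using True tpos by (simp add: indicator_def)
      next
        case False thus ?thesis by (simp add: indicator_def)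
      qed
    qed
    also have "\<dots> = measure_pmf.expectation (distR n) (\<lambda>(X,Y). (D1 ({..<n} - X) ({..<n} - Y))^2) / t^2" by (rule ER_div)
    also have "measure_pmf.expectation (distR n) (\<lambda>(X,Y). (D1 ({..<n} - X) ({..<n} - Y))^2)
             = measure_pmf.expectation (distR n) (\<lambda>(X,Y). (D1 X Y)^2)"
      using distR_compl[of n "\<lambda>(X,Y). (D1 X Y)^2"] by simp
    also have "\<dots> / t^2 \<le> (1 / real n) / t^2" by (rule divide_right_mono[OF ER_D1]) simp
    also have "\<dots> \<le> t" by (rule e3t)
    finally show ?thesis .
  qed
  have "measure_pmf.prob (distR n) ?G = measure_pmf.expectation (distR n) (indicator ?G)" by (rule prob_ER)
  also have "\<dots> \<ge> measure_pmf.expectation (distR n) (\<lambda>x. 1 - indicator Bc x - indicator B1 x - indicator B2 x)"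
    by (rule ER_mono) (rule ind)
  also have "measure_pmf.expectation (distR n) (\<lambda>x. 1 - indicator Bc x - indicator B1 x - indicator B2 x)
     = 1 - measure_pmf.expectation (distR n) (indicator Bc :: nat set \<times> nat set \<Rightarrow> real) - measure_pmf.expectation (distR n) (indicator B1 :: nat set \<times> nat set \<Rightarrow> real)
         - measure_pmf.expectation (distR n) (indicator B2 :: nat set \<times> nat set \<Rightarrow> real)"
  proof -
    have d1: "measure_pmf.expectation (distR n) (\<lambda>x. (1 - indicator Bc x - indicator B1 x) - indicator B2 x)
      = measure_pmf.expectation (distR n) (\<lambda>x. 1 - indicator Bc x - indicator B1 x) - measure_pmf.expectation (distR n) (indicator B2 :: nat set \<times> nat set \<Rightarrow> real)"
      by (rule ER_diff[of n "\<lambda>x. 1 - indicator Bc x - indicator B1 x" "indicator B2"])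
    have d2: "measure_pmf.expectation (distR n) (\<lambda>x. (1 - indicator Bc x) - indicator B1 x)
      = measure_pmf.expectation (distR n) (\<lambda>x. 1 - indicator Bc x) - measure_pmf.expectation (distR n) (indicator B1 :: nat set \<times> nat set \<Rightarrow> real)"
      by (rule ER_diff[of n "\<lambda>x. 1 - indicator Bc x" "indicator B1"])
    have d3: "measure_pmf.expectation (distR n) (\<lambda>x. 1 - indicator Bc x)
      = measure_pmf.expectation (distR n) (\<lambda>x. 1) - measure_pmf.expectation (distR n) (indicator Bc :: nat set \<times> nat set \<Rightarrow> real)"
      by (rule ER_diff[of n "\<lambda>x. 1" "indicator Bc"])
    show ?thesis using d1 d2 d3 by simp
  qed
  finally have "measure_pmf.prob (distR n) ?G \<ge> 1 - measure_pmf.expectation (distR n) (indicator Bc :: nat set \<times> nat set \<Rightarrow> real) - measure_pmf.expectation (distR n) (indicator B1 :: nat set \<times> nat set \<Rightarrow> real)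
         - measure_pmf.expectation (distR n) (indicator B2 :: nat set \<times> nat set \<Rightarrow> real)" .
  moreover have "1 - measure_pmf.expectation (distR n) (indicator Bc :: nat set \<times> nat set \<Rightarrow> real) - measure_pmf.expectation (distR n) (indicator B1 :: nat set \<times> nat set \<Rightarrow> real)
         - measure_pmf.expectation (distR n) (indicator B2 :: nat set \<times> nat set \<Rightarrow> real) \<ge> 1 - 3 * t"
    using pBc pB1 pB2 by simp
  ultimately show ?thesis unfolding t_def e_def by simp
qed

end
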